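(* Let $s,s'\in\mathbb C$, let $\phi,\phi'\colon\mathfrak X\to\mathbb C$ be $\Gamma$-invariant with $\Delta\phi=\chi(s)\phi$, $\Delta\phi'=\chi(s')\phi'$, with boundary values $\mu_{s,\phi},\mu_{s',\phi'}\in\mathcal D'(\Omega)$ ($\mathcal P_s\mu_{s,\phi}=\phi$, $\mathcal P_{s'}\mu_{s',\phi'}=\phi'$), and let $n\in\mathbb N$. For $a\in C^{\mathrm{lc}}(S\mathfrak X_\Gamma)$ define $a_n(x,\omega)=\sum a(y,\omega)$, the sum over all $y\in\mathfrak X$ with $d(y,x)=n$ and $x\in[y,\omega)$ (so $a_n\in C^{\mathrm{lc}}(S\mathfrak X_\Gamma)$). Then $$W^{\mathrm{near}}_n(a):=\int_{\Omega\times\Omega}\sum_{x\in\mathfrak X}\big(1-\mathbb 1_{S_n}(x,\omega,\omega')\big)\Xi(x,\omega)a(x,\omega)p_s(x,\omega)p_{-\overline{s'}}(x,\omega')\,d\mu_{s,\phi}(\omega)\,d\overline{\mu_{s',\phi'}}(\omega')$$ satisfies $$W^{\mathrm{near}}_n(a)=q^{-n(1+is-i\overline{s'})}\big(W_{\phi,\phi'}(a_n)-\mathrm{PS}^\Gamma_{\phi,\phi'}(a_n)\big).$$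
   Context: Let $q\ge2$, $\mathfrak G$ the $(q+1)$-regular tree with vertex set $\mathfrak X$, graph distance $d$, boundary $\Omega$ (infinite non-backtracking edge chains modulo eventual equality up to shift, compact totally disconnected); $[x,\omega)$ is the ray from $x$ to $\omega$, $]\omega',\omega[$ the vertex set of the geodesic joining $\omega'\ne\omega$. Fix $o\in\mathfrak X$; $\langle x,\omega\rangle=d(o,y)-d(x,y)$ where $[o,\omega)\cap[x,\omega)=[y,\omega)$. $p_s(x,\omega)=q^{(\frac12+is)\langle x,\omega\rangle}$, $\chi(s)=\frac{\sqrt q}{q+1}(q^{is}+q^{-is})$, $\Delta f(x)=\frac1{q+1}\sum_{d(x,y)=1}f(y)$. $\mathcal D'(\Omega)$ is the algebraic dual of the locally constant functions on $\Omega$; integrals denote the action of (tensor products of) such distributions; $\overline\mu(f)=\overline{\mu(\overline f)}$; $\mathcal P_s\mu(x)=\int p_s(x,\omega)d\mu(\omega)$. $\Gamma$ is a discrete group of tree automorphisms acting freely on $\mathfrak X$ with finite quotient. $S\mathfrak X=\mathfrak X\times\Omega$ with diagonal $\Gamma$-action; $C^{\mathrm{lc}}(S\mathfrak X_\Gamma)$ = $\Gamma$-invariant locally constant functions on $S\mathfrak X$. $\Xi$ is a fixed locally constant compactly supported function on $S\mathfrak X$ with $\sum_{\gamma\in\Gamma}\Xi(\gamma x,\gamma\omega)=1$. $S_n=\{(x,\omega,\omega'):\omega\ne\omega',\ d(x,]\omega,\omega'[)\le n\}$ and $\mathbb 1_{S_n}$ its indicator. For $b\in C^{\mathrm{lc}}(S\mathfrak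 X_\Gamma)$: $W_{\phi,\phi'}(b)=\int_{\Omega\times\Omega}\sum_{x\in\mathfrak X}\Xi(x,\omega)b(x,\omega)p_s(x,\omega)p_{-\overline{s'}}(x,\omega')\,d\mu_{s,\phi}(\omega)d\overline{\mu_{s',\phi'}}(\omega')$ (the Wigner distribution, equal to $\sum_{\Gamma x}(\mathrm{Op}(b)\phi)(x)\overline{\phi'(x)}$ with $\mathrm{Op}(b)\phi(x)=\int p_s(x,\omega)b(x,\omega)d\mu_{s,\phi}(\omega)$), and $\mathrm{PS}^\Gamma_{\phi,\phi'}(b)=\int_{\Omega\times\Omega}\sum_{x\in]\omega',\omega[}\Xi(x,\omega)b(x,\omega)p_s(x,\omega)p_{-\overline{s'}}(x,\omega')\,d\mu_{s,\phi}(\omega)d\overline{\mu_{s',\phi'}}(\omega')$ (empty sum if $\omega=\omega'$). *)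

theory Defs
  imports "HOL-Analysis.Analysis"
begin

definition walk :: "('v \<Rightarrow> 'v \<Rightarrow> bool) \<Rightarrow> (nat \<Rightarrow> 'v) \<Rightarrow> nat \<Rightarrow> bool" where
  "walk E p n \<longleftrightarrow> (\<forall>i<n. E (p i) (p (Suc i)))"

definition nonbacktracking :: "(nat \<Rightarrow> 'v) \<Rightarrow> nat \<Rightarrow> bool" where
  "nonbacktracking p n \<longleftrightarrow> (\<forall>i. i + 2 \<le> n \<longrightarrow> p (i + 2) \<noteq> p i)"

definition regular_tree :: "nat \<Rightarrow> ('v \<Rightarrow> 'v \<Rightarrow> bool) \<Rightarrow> bool" where
  "regular_tree q E \<longleftrightarrow>
     (\<forall>x y. E x y \<longrightarrow> E y x) \<and> (\<forall>x. \<not> E x x) \<and>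
     (\<forall>x. finite {y. E x y} \<and> card {y. E x y} = q + 1) \<and>
     (\<forall>x y. \<exists>p n. walk E p n \<and> p 0 = x \<and> p n = y) \<and>
     (\<forall>p n. walk E p n \<and> nonbacktracking p n \<and> 1 \<le> n \<longrightarrow> p 0 \<noteq> p n)"

definition tdist :: "('v \<Rightarrow> 'v \<Rightarrow> bool) \<Rightarrow> 'v \<Rightarrow> 'v \<Rightarrow> nat" where
  "tdist E x y = (LEAST n. \<exists>p. walk E p n \<and> p 0 = x \<and> p n = y)"

definition is_ray :: "('v \<Rightarrow> 'v \<Rightarrow> bool) \<Rightarrow> (nat \<Rightarrow> 'v) \<Rightarrow> bool" where
  "is_ray E r \<longleftrightarrow> (\<forall>n. E (r n) (r (Suc n)) \<and> r (n + 2) \<noteq> r n)"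

definition ray_equiv :: "(nat \<Rightarrow> 'v) \<Rightarrow> (nat \<Rightarrow> 'v) \<Rightarrow> bool" where
  "ray_equiv r r' \<longleftrightarrow> (\<exists>k m. \<forall>n. r (n + k) = r' (n + m))"

type_synonym 'v bdry = "(nat \<Rightarrow> 'v) set"

definition boundary :: "('v \<Rightarrow> 'v \<Rightarrow> bool) \<Rightarrow> 'v bdry set" where
  "boundary E = {{r'. is_ray E r' \<and> ray_equiv r r'} | r. is_ray E r}"

text \<open>The ray from x to \<omega> and its vertex set [x,\<omega>).\<close>
definition ray_to :: "('v \<Rightarrow> 'v \<Rightarrow> bool) \<Rightarrow> 'v \<Rightarrow> 'v bdry \<Rightarrow> (nat \<Rightarrow> 'v)" where
  "ray_to E x \<omega> = (THE r. r \<in> \<omega> \<and> r 0 = x)"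

definition rayset :: "('v \<Rightarrow> 'v \<Rightarrow> bool) \<Rightarrow> 'v \<Rightarrow> 'v bdry \<Rightarrow> 'v set" where
  "rayset E x \<omega> = range (ray_to E x \<omega>)"

definition horo :: "('v \<Rightarrow> 'v \<Rightarrow> bool) \<Rightarrow> 'v \<Rightarrow> 'v \<Rightarrow> 'v bdry \<Rightarrow> int" where
  "horo E o' x \<omega> =
     (let y = (THE y. rayset E o' \<omega> \<inter> rayset E x \<omega> = rayset E y \<omega>)
      in int (tdist E o' y) - int (tdist E x y))"

text \<open>Vertex set of the geodesic ]\<omega>',\<omega>[ (empty if \<omega> = \<omega>').\<close>
definition geod :: "('v \<Rightarrow> 'v \<Rightarrow> bool) \<Rightarrow> 'v bdry \<Rightarrow> 'v bdry \<Rightarrow> 'v set" where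
  "geod E \<omega>' \<omega> =
     (if \<omega> = \<omega>' then {} else
      {v. \<exists>g :: int \<Rightarrow> 'v. (\<forall>k. E (g k) (g (k + 1)) \<and> g (k + 2) \<noteq> g k) \<and>
            (\<lambda>n. g (int n)) \<in> \<omega> \<and> (\<lambda>n. g (- int n)) \<in> \<omega>' \<and> v \<in> range g})"

text \<open>Cone topology: basic open sets, and locally constant functions on \<Omega>.\<close>
definition cone :: "('v \<Rightarrow> 'v \<Rightarrow> bool) \<Rightarrow> 'v \<Rightarrow> 'v \<Rightarrow> 'v bdry set" where
  "cone E x y = {\<omega> \<in> boundary E. y \<in> rayset E x \<omega>}"

definition loc_const :: "('v \<Rightarrow> 'v \<Rightarrow> bool) \<Rightarrow> ('v bdry \<Rightarrow> complex) \<Rightarrow> bool" where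
  "loc_const E f \<longleftrightarrow>
     (\<forall>\<omega>\<in>boundary E. \<exists>x y. \<omega> \<in> cone E x y \<and> (\<forall>\<eta>\<in>cone E x y. f \<eta> = f \<omega>))"

text \<open>Elements of the algebraic dual of the locally constant functions on \<Omega>.\<close>
definition distribution :: "('v \<Rightarrow> 'v \<Rightarrow> bool) \<Rightarrow> (('v bdry \<Rightarrow> complex) \<Rightarrow> complex) \<Rightarrow> bool" where
  "distribution E \<mu> \<longleftrightarrow>
     (\<forall>f g. loc_const E f \<and> (\<forall>\<omega>\<in>boundary E. f \<omega> = g \<omega>) \<longrightarrow> \<mu> f = \<mu> g) \<and>
     (\<forall>f g. loc_const E f \<and> loc_const E g \<longrightarrow> \<mu> (\<lambda>\<omega>. f \<omega> + g \<omega>) = \<mu> f + \<mu> g) \<and>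
     (\<forall>c f. loc_const E f \<longrightarrow> \<mu> (\<lambda>\<omega>. c * f \<omega>) = c * \<mu> f)"

text \<open>Conjugate distribution and tensor product (iterated action).\<close>
definition cdist :: "(('v bdry \<Rightarrow> complex) \<Rightarrow> complex) \<Rightarrow> ('v bdry \<Rightarrow> complex) \<Rightarrow> complex" where
  "cdist \<nu> f = cnj (\<nu> (\<lambda>\<omega>. cnj (f \<omega>)))"

definition tensor_int ::
  "(('v bdry \<Rightarrow> complex) \<Rightarrow> complex) \<Rightarrow> (('v bdry \<Rightarrow> complex) \<Rightarrow> complex)
    \<Rightarrow> ('v bdry \<Rightarrow> 'v bdry \<Rightarrow> complex) \<Rightarrow> complex" where
  "tensor_int \<mu> \<nu> F = \<mu> (\<lambda>\<omega>. \<nu> (\<lambda>\<omega>'. F \<omega> \<omega>'))"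

definition poisson :: "nat \<Rightarrow> ('v \<Rightarrow> 'v \<Rightarrow> bool) \<Rightarrow> 'v \<Rightarrow> complex \<Rightarrow> 'v \<Rightarrow> 'v bdry \<Rightarrow> complex" where
  "poisson q E o' s x \<omega> =
     exp ((1/2 + \<i> * s) * of_int (horo E o' x \<omega>) * of_real (ln (real q)))"

definition poisson_transform ::
  "nat \<Rightarrow> ('v \<Rightarrow> 'v \<Rightarrow> bool) \<Rightarrow> 'v \<Rightarrow> complex \<Rightarrow> (('v bdry \<Rightarrow> complex) \<Rightarrow> complex) \<Rightarrow> 'v \<Rightarrow> complex" where
  "poisson_transform q E o' s \<mu> x = \<mu> (\<lambda>\<omega>. poisson q E o' s x \<omega>)"

definition tree_laplacian :: "nat \<Rightarrow> ('v \<Rightarrow> 'v \<Rightarrow> bool) \<Rightarrow> ('v \<Rightarrow> complex) \<Rightarrow> 'v \<Rightarrow> complex" where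
  "tree_laplacian q E f x = (1 / of_nat (q + 1)) * (\<Sum>y\<in>{y. E x y}. f y)"

definition chi :: "nat \<Rightarrow> complex \<Rightarrow> complex" where
  "chi q s = of_real (sqrt (real q) / real (q + 1)) *
     (exp (\<i> * s * of_real (ln (real q))) + exp (- \<i> * s * of_real (ln (real q))))"

text \<open>\<mu> is THE boundary value of \<phi>: the (unique) distribution with Poisson transform \<phi>.\<close>
definition boundary_value ::
  "nat \<Rightarrow> ('v \<Rightarrow> 'v \<Rightarrow> bool) \<Rightarrow> 'v \<Rightarrow> complex \<Rightarrow> ('v \<Rightarrow> complex)
     \<Rightarrow> (('v bdry \<Rightarrow> complex) \<Rightarrow> complex) \<Rightarrow> bool" where
  "boundary_value q E o' s \<phi> \<mu> \<longleftrightarrow>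
     distribution E \<mu> \<and> (\<forall>x. poisson_transform q E o' s \<mu> x = \<phi> x) \<and>
     (\<forall>\<nu>. distribution E \<nu> \<and> (\<forall>x. poisson_transform q E o' s \<nu> x = \<phi> x)
          \<longrightarrow> (\<forall>f. loc_const E f \<longrightarrow> \<nu> f = \<mu> f))"

definition bact :: "('v \<Rightarrow> 'v) \<Rightarrow> 'v bdry \<Rightarrow> 'v bdry" where
  "bact \<gamma> \<omega> = (\<lambda>r. \<gamma> \<circ> r) ` \<omega>"

text \<open>A group of tree automorphisms acting freely on vertices with finite quotient.
  (Discreteness is automatic for a free action.)\<close>
definition tree_lattice :: "('v \<Rightarrow> 'v \<Rightarrow> bool) \<Rightarrow> ('v \<Rightarrow> 'v) set \<Rightarrow> bool" where
  "tree_lattice E \<Gamma> \<longleftrightarrow>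
     id \<in> \<Gamma> \<and> (\<forall>\<gamma>\<in>\<Gamma>. \<forall>\<delta>\<in>\<Gamma>. \<gamma> \<circ> \<delta> \<in> \<Gamma>) \<and>
     (\<forall>\<gamma>\<in>\<Gamma>. bij \<gamma> \<and> inv \<gamma> \<in> \<Gamma> \<and> (\<forall>x y. E (\<gamma> x) (\<gamma> y) \<longleftrightarrow> E x y)) \<and>
     (\<forall>\<gamma>\<in>\<Gamma>. \<forall>x. \<gamma> x = x \<longrightarrow> \<gamma> = id) \<and>
     finite ((\<lambda>x. (\<lambda>\<gamma>. \<gamma> x) ` \<Gamma>) ` UNIV)"

text \<open>Locally constant compactly supported \<Xi> on S X with \<Sum>_\<gamma> \<Xi>(\<gamma>x,\<gamma>\<omega>) = 1
  (the sum is over the finitely many \<gamma> with nonzero term).\<close>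
definition cutoff :: "('v \<Rightarrow> 'v \<Rightarrow> bool) \<Rightarrow> ('v \<Rightarrow> 'v) set \<Rightarrow> ('v \<Rightarrow> 'v bdry \<Rightarrow> complex) \<Rightarrow> bool" where
  "cutoff E \<Gamma> \<Xi> \<longleftrightarrow>
     finite {x. \<exists>\<omega>\<in>boundary E. \<Xi> x \<omega> \<noteq> 0} \<and> (\<forall>x. loc_const E (\<Xi> x)) \<and>
     (\<forall>x. \<forall>\<omega>\<in>boundary E.
        (\<Sum>\<gamma>\<in>{\<gamma>\<in>\<Gamma>. \<Xi> (\<gamma> x) (bact \<gamma> \<omega>) \<noteq> 0}. \<Xi> (\<gamma> x) (bact \<gamma> \<omega>)) = 1)"

text \<open>C^lc(S X_\<Gamma>): \<Gamma>-invariant locally constant functions on X \<times> \<Omega>.\<close>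
definition lc_inv :: "('v \<Rightarrow> 'v \<Rightarrow> bool) \<Rightarrow> ('v \<Rightarrow> 'v) set \<Rightarrow> ('v \<Rightarrow> 'v bdry \<Rightarrow> complex) \<Rightarrow> bool" where
  "lc_inv E \<Gamma> b \<longleftrightarrow> (\<forall>x. loc_const E (b x)) \<and>
     (\<forall>\<gamma>\<in>\<Gamma>. \<forall>x. \<forall>\<omega>\<in>boundary E. b (\<gamma> x) (bact \<gamma> \<omega>) = b x \<omega>)"

definition shift_sum :: "('v \<Rightarrow> 'v \<Rightarrow> bool) \<Rightarrow> nat \<Rightarrow> ('v \<Rightarrow> 'v bdry \<Rightarrow> complex) \<Rightarrow> 'v \<Rightarrow> 'v bdry \<Rightarrow> complex" where
  "shift_sum E n a x \<omega> = (\<Sum>y\<in>{y. tdist E y x = n \<and> x \<in> rayset E y \<omega>}. a y \<omega>)"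

definition in_S :: "('v \<Rightarrow> 'v \<Rightarrow> bool) \<Rightarrow> nat \<Rightarrow> 'v \<Rightarrow> 'v bdry \<Rightarrow> 'v bdry \<Rightarrow> bool" where
  "in_S E n x \<omega> \<omega>' \<longleftrightarrow> \<omega> \<noteq> \<omega>' \<and> (\<exists>z\<in>geod E \<omega> \<omega>'. tdist E x z \<le> n)"

definition wigner ::
  "nat \<Rightarrow> ('v \<Rightarrow> 'v \<Rightarrow> bool) \<Rightarrow> 'v \<Rightarrow> ('v \<Rightarrow> 'v bdry \<Rightarrow> complex) \<Rightarrow> complex \<Rightarrow> complex
    \<Rightarrow> (('v bdry \<Rightarrow> complex) \<Rightarrow> complex) \<Rightarrow> (('v bdry \<Rightarrow> complex) \<Rightarrow> complex)
    \<Rightarrow> ('v \<Rightarrow> 'v bdry \<Rightarrow> complex) \<Rightarrow> complex" where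
  "wigner q E o' \<Xi> s s' \<mu> \<mu>' b =
     tensor_int \<mu> (cdist \<mu>') (\<lambda>\<omega> \<omega>'.
       \<Sum>x\<in>{x. \<Xi> x \<omega> \<noteq> 0}.
         \<Xi> x \<omega> * b x \<omega> * poisson q E o' s x \<omega> * poisson q E o' (- cnj s') x \<omega>')"

definition patterson_sullivan ::
  "nat \<Rightarrow> ('v \<Rightarrow> 'v \<Rightarrow> bool) \<Rightarrow> 'v \<Rightarrow> ('v \<Rightarrow> 'v bdry \<Rightarrow> complex) \<Rightarrow> complex \<Rightarrow> complex
    \<Rightarrow> (('v bdry \<Rightarrow> complex) \<Rightarrow> complex) \<Rightarrow> (('v bdry \<Rightarrow> complex) \<Rightarrow> complex)
    \<Rightarrow> ('v \<Rightarrow> 'v bdry \<Rightarrow> complex) \<Rightarrow> complex" where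
  "patterson_sullivan q E o' \<Xi> s s' \<mu> \<mu>' b =
     tensor_int \<mu> (cdist \<mu>') (\<lambda>\<omega> \<omega>'.
       \<Sum>x\<in>{x\<in>geod E \<omega>' \<omega>. \<Xi> x \<omega> \<noteq> 0}.
         \<Xi> x \<omega> * b x \<omega> * poisson q E o' s x \<omega> * poisson q E o' (- cnj s') x \<omega>')"

definition wigner_near ::
  "nat \<Rightarrow> ('v \<Rightarrow> 'v \<Rightarrow> bool) \<Rightarrow> 'v \<Rightarrow> ('v \<Rightarrow> 'v bdry \<Rightarrow> complex) \<Rightarrow> complex \<Rightarrow> complex
    \<Rightarrow> (('v bdry \<Rightarrow> complex) \<Rightarrow> complex) \<Rightarrow> (('v bdry \<Rightarrow> complex) \<Rightarrow> complex)
    \<Rightarrow> nat \<Rightarrow> ('v \<Rightarrow> 'v bdry \<Rightarrow> complex) \<Rightarrow> complex" where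
  "wigner_near q E o' \<Xi> s s' \<mu> \<mu>' n a =
     tensor_int \<mu> (cdist \<mu>') (\<lambda>\<omega> \<omega>'.
       \<Sum>x\<in>{x. \<Xi> x \<omega> \<noteq> 0}.
         (1 - (if in_S E n x \<omega> \<omega>' then 1 else 0)) *
         \<Xi> x \<omega> * a x \<omega> * poisson q E o' s x \<omega> * poisson q E o' (- cnj s') x \<omega>')"

end

theory Submission
  imports Defs
begin

locale tree =
  fixes q :: nat and E :: "'v \<Rightarrow> 'v \<Rightarrow> bool"
  assumes reg: "regular_tree q E"
begin

lemma Esym: "E x y \<Longrightarrow> E y x" using reg unfolding regular_tree_def by blast
lemma Eirr: "\<not> E x x" using reg unfolding regular_tree_def by blast
lemma nbr_finite: "finite {y. E x y}" using reg unfolding regular_tree_def by blast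
lemma conn: "\<exists>p n. walk E p n \<and> p 0 = x \<and> p n = y" using reg unfolding regular_tree_def by blast
lemma nocyc: "walk E p n \<Longrightarrow> nonbacktracking p n \<Longrightarrow> 1 \<le> n \<Longrightarrow> p 0 \<noteq> p n"
  using reg unfolding regular_tree_def by blast

lemma walk_le: "walk E p k \<Longrightarrow> j \<le> k \<Longrightarrow> walk E p j"
  unfolding walk_def by auto
lemma nb_le: "nonbacktracking p k \<Longrightarrow> j \<le> k \<Longrightarrow> nonbacktracking p j"
  unfolding nonbacktracking_def by auto

lemma unique_nb:
  assumes "walk E p k" "nonbacktracking p k" "walk E p' k'" "nonbacktracking p' k'"
    "p 0 = p' 0" "p k = p' k'"
  shows "k = k' \<and> (\<forall>i\<le>k. p i = p' i)"
  using assms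
proof (induction "k+k'" arbitrary: k k' rule: less_induct)
  case less
  show ?case
  proof (cases "k = 0 \<or> k' = 0")
    case True
    then show ?thesis
    proof
      assume k0: "k = 0"
      have "k' = 0"
      proof (rule ccontr)
        assume "k' \<noteq> 0"
        then have "p' 0 \<noteq> p' k'" using nocyc[of p' k'] less.prems by auto
        then show False using less.prems k0 by simp
      qed
      then show ?thesis using k0 less.prems by auto
    next
      assume k0: "k' = 0"
      have "k = 0"
      proof (rule ccontr)
        assume "k \<noteq> 0"
        then have "p 0 \<noteq> p k" using nocyc[of p k] less.prems by auto
        then show False using less.prems k0 by simp
      qed
      then show ?thesis using k0 less.prems by auto
    qed
  next
    case False
    then obtain a b where k: "k = Suc a" "k' = Suc b" by (cases k; cases k') auto
    show ?thesis
    proof (cases "p a = p' b")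
      case True
      have "walk E p a" "nonbacktracking p a" "walk E p' b" "nonbacktracking p' b"
        using less.prems k by (simp_all add: walk_def nonbacktracking_def)
      with less.hyps[of a b] True less.prems have "a = b" "\<forall>i\<le>a. p i = p' i" using k by auto
      then show ?thesis using k less.prems(6) by (auto simp: le_Suc_eq)
    next
      case False
      define r where "r i = (if i \<le> k then p i else p' (k + k' - i))" for i
      have r2: "r i = p' (k + k' - i)" if "k \<le> i" for i
        using that less.prems(6) unfolding r_def by (cases "i = k") auto
      have r1: "r i = p i" if "i \<le> k" for i using that unfolding r_def by auto
      have w: "walk E r (k+k')"
        unfolding walk_def
      proof (intro allI impI)
        fix i assume i: "i < k + k'"
        show "E (r i) (r (Suc i))"
        proof (cases "i < k")
          case True
          then show ?thesis using less.prems(1) r1[of i] r1[of "Suc i"] unfolding walk_def by auto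
        next
          case False
          then have "E (p' (k + k' - Suc i)) (p' (Suc (k + k' - Suc i)))"
            using less.prems(3) i unfolding walk_def by auto
          moreover have "Suc (k + k' - Suc i) = k + k' - i" using i by arith
          ultimately show ?thesis using r2[of i] r2[of "Suc i"] False Esym by auto
        qed
      qed
      have nb: "nonbacktracking r (k+k')"
        unfolding nonbacktracking_def
      proof (intro allI impI)
        fix i assume i: "i + 2 \<le> k + k'"
        show "r (i+2) \<noteq> r i"
        proof (cases "i + 2 \<le> k")
          case True
          then show ?thesis using less.prems(2) r1[of i] r1[of "i+2"] unfolding nonbacktracking_def by auto
        next
          case F1: False
          show ?thesis
          proof (cases "k \<le> i")
            case True
            have le: "k + k' - (i+2) + 2 \<le> k'" using True i by arith
            have "p' (k + k' - (i+2) + 2) \<noteq> p' (k + k' - (i+2))"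
              using less.prems(4) le unfolding nonbacktracking_def by blast
            moreover have "k + k' - (i+2) + 2 = k + k' - i" using i by arith
            ultimately show ?thesis using r2[of i] r2[of "i+2"] True by auto
          next
            case False
            then have "i = a" using F1 k by arith
            then show ?thesis using r1[of a] r2[of "a+2"] k \<open>p a \<noteq> p' b\<close> by auto
          qed
        qed
      qed
      have "r 0 = r (k+k')" using r1[of 0] r2[of "k+k'"] less.prems(5) by auto
      moreover have "1 \<le> k + k'" using k by auto
      ultimately show ?thesis using nocyc[OF w nb] by auto
    qed
  qed
qed

end

context tree begin

lemma tdist_walk:
  obtains p where "walk E p (tdist E x y)" "p 0 = x" "p (tdist E x y) = y"
proof -
  have "\<exists>n p. walk E p n \<and> p 0 = x \<and> p n = y" using conn by blast
  then have "\<exists>p. walk E p (tdist E x y) \<and> p 0 = x \<and> p (tdist E x y) = y"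
    unfolding tdist_def by (rule LeastI_ex)
  then show ?thesis using that by blast
qed

lemma tdist_le: "walk E p n \<Longrightarrow> tdist E (p 0) (p n) \<le> n"
  unfolding tdist_def by (rule Least_le) blast

lemma geod_exists:
  obtains p where "walk E p (tdist E x y)" "nonbacktracking p (tdist E x y)"
    "p 0 = x" "p (tdist E x y) = y"
proof -
  obtain p where p: "walk E p (tdist E x y)" "p 0 = x" "p (tdist E x y) = y"
    by (rule tdist_walk)
  define d where "d = tdist E x y"
  have "nonbacktracking p d"
    unfolding nonbacktracking_def
  proof (intro allI impI)
    fix i assume i: "i + 2 \<le> d"
    show "p (i+2) \<noteq> p i"
    proof
      assume eq: "p (i+2) = p i"
      define p' where "p' j = (if j \<le> i then p j else p (j+2))" for j
      have "walk E p' (d-2)"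
        unfolding walk_def
      proof (intro allI impI)
        fix j assume j: "j < d - 2"
        show "E (p' j) (p' (Suc j))"
        proof (cases "j < i")
          case True then show ?thesis using p(1) i unfolding p'_def walk_def d_def by auto
        next
          case False
          then have "E (p (j+2)) (p (Suc (j+2)))" using p(1) j unfolding walk_def d_def by auto
          then show ?thesis using False eq unfolding p'_def by (cases "j = i") auto
        qed
      qed
      then have "tdist E (p' 0) (p' (d-2)) \<le> d - 2" by (rule tdist_le)
      moreover have "p' 0 = x" using p unfolding p'_def by auto
      moreover have "p' (d-2) = y"
      proof -
        have pd: "p d = y" using p(3) d_def by simp
        show ?thesis
        proof (cases "d - 2 \<le> i")
          case True
          then have "d - 2 = i" "d = i + 2" using i by arith+
          then show ?thesis using pd eq unfolding p'_def by simp
        next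
          case False
          then have "d - 2 + 2 = d" using i by arith
          then show ?thesis using pd False unfolding p'_def by simp
        qed
      qed
      ultimately show False using i unfolding d_def by auto
    qed
  qed
  then show ?thesis using that p d_def by blast
qed

lemma tdist_nb: "walk E p k \<Longrightarrow> nonbacktracking p k \<Longrightarrow> tdist E (p 0) (p k) = k"
proof -
  assume a: "walk E p k" "nonbacktracking p k"
  obtain p' where p': "walk E p' (tdist E (p 0) (p k))" "nonbacktracking p' (tdist E (p 0) (p k))"
    "p' 0 = p 0" "p' (tdist E (p 0) (p k)) = p k" by (rule geod_exists)
  from unique_nb[OF a p'(1,2)] p'(3,4) show ?thesis by auto
qed

lemma tdist_sym_le: "tdist E y x \<le> tdist E x y"
proof -
  obtain p where p: "walk E p (tdist E x y)" "p 0 = x" "p (tdist E x y) = y"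
    by (rule tdist_walk)
  define d where "d = tdist E x y"
  have "walk E (\<lambda>i. p (d - i)) d"
    unfolding walk_def
  proof (intro allI impI)
    fix i assume "i < d"
    then have "E (p (d - Suc i)) (p (Suc (d - Suc i)))" using p(1) unfolding walk_def d_def by auto
    moreover have "Suc (d - Suc i) = d - i" using \<open>i < d\<close> by arith
    ultimately show "E (p (d - i)) (p (d - Suc i))" using Esym by auto
  qed
  from tdist_le[OF this] show ?thesis using p unfolding d_def by auto
qed

lemma tdist_sym: "tdist E x y = tdist E y x"
  using tdist_sym_le[of x y] tdist_sym_le[of y x] by auto

lemma tdist_refl: "tdist E x x = 0"
  using tdist_le[of "\<lambda>_. x" 0] unfolding walk_def by auto

lemma tdist_0: "tdist E x y = 0 \<longleftrightarrow> x = y"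
proof
  assume "tdist E x y = 0"
  then show "x = y" using tdist_walk[of x y] by metis
qed (simp add: tdist_refl)

lemma ball_finite: "finite {y. tdist E x y \<le> k}"
proof (induction k)
  case 0
  then show ?case using tdist_0[of x] by simp
next
  case (Suc k)
  have "{y. tdist E x y \<le> Suc k} \<subseteq> {y. tdist E x y \<le> k} \<union> (\<Union>z\<in>{y. tdist E x y \<le> k}. {w. E z w})"
  proof
    fix y assume "y \<in> {y. tdist E x y \<le> Suc k}"
    then have y: "tdist E x y \<le> Suc k" by simp
    show "y \<in> {y. tdist E x y \<le> k} \<union> (\<Union>z\<in>{y. tdist E x y \<le> k}. {w. E z w})"
    proof (cases "tdist E x y = Suc k")
      case True
      obtain p where p: "walk E p (tdist E x y)" "p 0 = x" "p (tdist E x y) = y"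
        by (rule tdist_walk)
      have "walk E p k" using p(1) True walk_le by auto
      then have "tdist E x (p k) \<le> k" using tdist_le p(2) by metis
      moreover have "E (p k) y" using p True unfolding walk_def by auto
      ultimately show ?thesis by blast
    qed (use y in auto)
  qed
  moreover have "finite (\<Union>z\<in>{y. tdist E x y \<le> k}. {w. E z w})"
    using Suc nbr_finite by auto
  ultimately show ?case using Suc by (meson finite_UnI finite_subset)
qed

end

context tree begin

lemma ray_walk: "is_ray E r \<Longrightarrow> walk E r k"
  unfolding is_ray_def walk_def by auto
lemma ray_nb: "is_ray E r \<Longrightarrow> nonbacktracking r k"
  unfolding is_ray_def nonbacktracking_def by auto
lemma ray_shift: "is_ray E r \<Longrightarrow> is_ray E (\<lambda>i. r (i + a))"
  unfolding is_ray_def by (auto simp: add.commute add.left_commute)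
lemma ray_tdist: "is_ray E r \<Longrightarrow> tdist E (r 0) (r k) = k"
  using tdist_nb ray_walk ray_nb by blast

lemma ray_equiv_sym: "ray_equiv r r' \<Longrightarrow> ray_equiv r' r"
  unfolding ray_equiv_def by metis
lemma ray_equiv_trans: "ray_equiv r r' \<Longrightarrow> ray_equiv r' r'' \<Longrightarrow> ray_equiv r r''"
proof -
  assume "ray_equiv r r'" "ray_equiv r' r''"
  then obtain k m k' m' where a: "\<forall>n. r (n + k) = r' (n + m)" and b: "\<forall>n. r' (n + k') = r'' (n + m')"
    unfolding ray_equiv_def by blast
  have "\<forall>n. r (n + (k + k')) = r'' (n + (m + m'))"
  proof
    fix n
    have "r (n + (k + k')) = r' ((n + k') + m)" using a[rule_format, of "n + k'"] by (simp add: ac_simps)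
    also have "\<dots> = r' ((n + m) + k')" by (simp add: ac_simps)
    also have "\<dots> = r'' (n + (m + m'))" using b[rule_format, of "n + m"] by (simp add: ac_simps)
    finally show "r (n + (k + k')) = r'' (n + (m + m'))" .
  qed
  then show ?thesis unfolding ray_equiv_def by blast
qed
lemma ray_equiv_refl: "ray_equiv r r" unfolding ray_equiv_def by blast

lemma bdry_cases:
  assumes "\<omega> \<in> boundary E"
  obtains r0 where "is_ray E r0" "\<omega> = {r'. is_ray E r' \<and> ray_equiv r0 r'}"
  using assms unfolding boundary_def by blast

lemma bdry_ray: "\<omega> \<in> boundary E \<Longrightarrow> r \<in> \<omega> \<Longrightarrow> is_ray E r"
  by (erule bdry_cases) auto

lemma bdry_equiv: "\<omega> \<in> boundary E \<Longrightarrow> r \<in> \<omega> \<Longrightarrow> r' \<in> \<omega> \<Longrightarrow> ray_equiv r r'"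
  by (erule bdry_cases) (auto intro: ray_equiv_trans ray_equiv_sym)

lemma bdry_closed: "\<omega> \<in> boundary E \<Longrightarrow> r \<in> \<omega> \<Longrightarrow> is_ray E r' \<Longrightarrow> ray_equiv r r' \<Longrightarrow> r' \<in> \<omega>"
  by (erule bdry_cases) (auto intro: ray_equiv_trans ray_equiv_sym)

lemma bdry_ne: "\<omega> \<in> boundary E \<Longrightarrow> \<exists>r. r \<in> \<omega>"
  by (erule bdry_cases) (auto intro: ray_equiv_refl)

lemma ray_unique:
  assumes "\<omega> \<in> boundary E" "r \<in> \<omega>" "r' \<in> \<omega>" "r 0 = r' 0"
  shows "r = r'"
proof -
  have rr: "is_ray E r" "is_ray E r'" using assms bdry_ray by auto
  obtain k m where km: "\<forall>n. r (n + k) = r' (n + m)"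
    using bdry_equiv[OF assms(1-3)] unfolding ray_equiv_def by blast
  have "r k = r' m" using km[rule_format, of 0] by simp
  from unique_nb[OF ray_walk[OF rr(1)] ray_nb[OF rr(1)] ray_walk[OF rr(2)] ray_nb[OF rr(2)] assms(4) this]
  have "k = m" "\<forall>i\<le>k. r i = r' i" by auto
  show ?thesis
  proof
    fix i show "r i = r' i"
    proof (cases "i \<le> k")
      case True then show ?thesis using \<open>\<forall>i\<le>k. r i = r' i\<close> by auto
    next
      case False
      then have "i = (i - k) + k" by simp
      then show ?thesis using km[rule_format, of "i - k"] \<open>k = m\<close> by metis
    qed
  qed
qed

lemma ray_exists:
  assumes "\<omega> \<in> boundary E"
  shows "\<exists>r\<in>\<omega>. r 0 = x"
proof -
  obtain r0 where r0: "r0 \<in> \<omega>" using bdry_ne[OF assms] by blast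
  have rr0: "is_ray E r0" using bdry_ray[OF assms r0] .
  obtain k0 where k0: "\<forall>k. tdist E x (r0 k0) \<le> tdist E x (r0 k)"
  proof -
    have "\<exists>k0. tdist E x (r0 k0) = (LEAST d. \<exists>k. tdist E x (r0 k) = d)"
      by (rule LeastI_ex) blast
    then obtain k0 where "tdist E x (r0 k0) = (LEAST d. \<exists>k. tdist E x (r0 k) = d)" by blast
    moreover have "\<forall>k. (LEAST d. \<exists>k. tdist E x (r0 k) = d) \<le> tdist E x (r0 k)"
      by (auto intro: Least_le)
    ultimately show ?thesis using that by metis
  qed
  define d where "d = tdist E x (r0 k0)"
  obtain p where p: "walk E p d" "nonbacktracking p d" "p 0 = x" "p d = r0 k0"
    unfolding d_def by (rule geod_exists)
  define r where "r i = (if i \<le> d then p i else r0 (i - d + k0))" for i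
  have rd: "r i = r0 (i - d + k0)" if "d \<le> i" for i
    using that p(4) unfolding r_def by (cases "i = d") auto
  have junc: "p (d - 1) \<noteq> r0 (k0 + 1)" if "d \<ge> 1"
  proof
    assume eq: "p (d - 1) = r0 (k0 + 1)"
    have "walk E p (d - 1)" using walk_le[OF p(1)] by simp
    from tdist_le[OF this] eq p(3) have "tdist E x (r0 (k0 + 1)) \<le> d - 1" by simp
    then show False using k0[rule_format, of "k0+1"] that unfolding d_def by simp
  qed
  have "is_ray E r"
    unfolding is_ray_def
  proof (intro allI conjI)
    fix i
    show "E (r i) (r (Suc i))"
    proof (cases "i < d")
      case True then show ?thesis using p(1) unfolding r_def walk_def by auto
    next
      case False
      then have "E (r0 (i - d + k0)) (r0 (Suc (i - d + k0)))" using rr0 unfolding is_ray_def by blast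
      moreover have "Suc (i - d + k0) = Suc i - d + k0" using False by arith
      ultimately show ?thesis using rd[of i] rd[of "Suc i"] False by auto
    qed
    show "r (i + 2) \<noteq> r i"
    proof (cases "i + 2 \<le> d")
      case True then show ?thesis using p(2) unfolding r_def nonbacktracking_def by auto
    next
      case F: False
      show ?thesis
      proof (cases "d \<le> i")
        case True
        then have "r0 (i - d + k0 + 2) \<noteq> r0 (i - d + k0)" using rr0 unfolding is_ray_def by blast
        moreover have "i - d + k0 + 2 = i + 2 - d + k0" using True by arith
        ultimately show ?thesis using rd[of i] rd[of "i+2"] True by auto
      next
        case False
        then have "i = d - 1" "d \<ge> 1" using F by arith+
        moreover have "i + 2 - d + k0 = k0 + 1" using \<open>i = d - 1\<close> \<open>d \<ge> 1\<close> by arith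
        ultimately show ?thesis using rd[of "i+2"] junc unfolding r_def by auto
      qed
    qed
  qed
  moreover have "ray_equiv r0 r"
    unfolding ray_equiv_def by (rule exI[of _ k0], rule exI[of _ d]) (auto simp: rd)
  ultimately have "r \<in> \<omega>" using bdry_closed[OF assms r0] by blast
  moreover have "r 0 = x" using p(3) unfolding r_def by simp
  ultimately show ?thesis by blast
qed

lemma R_ex1: "\<omega> \<in> boundary E \<Longrightarrow> \<exists>!r. r \<in> \<omega> \<and> r 0 = x"
  using ray_exists ray_unique by metis

lemma R_mem: "\<omega> \<in> boundary E \<Longrightarrow> ray_to E x \<omega> \<in> \<omega>"
  and R_0: "\<omega> \<in> boundary E \<Longrightarrow> ray_to E x \<omega> 0 = x"
  using theI'[OF R_ex1[of \<omega> x]] unfolding ray_to_def by auto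

lemma R_unique: "\<omega> \<in> boundary E \<Longrightarrow> r \<in> \<omega> \<Longrightarrow> r 0 = x \<Longrightarrow> ray_to E x \<omega> = r"
  using R_mem R_0 ray_unique by metis

lemma R_ray: "\<omega> \<in> boundary E \<Longrightarrow> is_ray E (ray_to E x \<omega>)"
  using R_mem bdry_ray by blast

lemma R_E: "\<omega> \<in> boundary E \<Longrightarrow> E (ray_to E x \<omega> i) (ray_to E x \<omega> (Suc i))"
  using R_ray unfolding is_ray_def by blast

lemma R_nb: "\<omega> \<in> boundary E \<Longrightarrow> ray_to E x \<omega> (i + 2) \<noteq> ray_to E x \<omega> i"
  using R_ray unfolding is_ray_def by blast

lemma R_shift: assumes "\<omega> \<in> boundary E"
  shows "ray_to E x \<omega> (k + j) = ray_to E (ray_to E x \<omega> k) \<omega> j"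
proof -
  let ?r = "ray_to E x \<omega>"
  have "is_ray E (\<lambda>i. ?r (i + k))" using ray_shift R_ray assms by blast
  moreover have "ray_equiv ?r (\<lambda>i. ?r (i + k))"
    unfolding ray_equiv_def by (rule exI[of _ k], rule exI[of _ 0]) simp
  ultimately have "(\<lambda>i. ?r (i + k)) \<in> \<omega>" using bdry_closed[OF assms R_mem[OF assms]] by blast
  then have "ray_to E (?r k) \<omega> = (\<lambda>i. ?r (i + k))" using R_unique[OF assms] by simp
  then show ?thesis by (simp add: add.commute)
qed

lemma R_tdist: "\<omega> \<in> boundary E \<Longrightarrow> tdist E x (ray_to E x \<omega> k) = k"
  using ray_tdist[OF R_ray] R_0 by metis

lemma R_inj: "\<omega> \<in> boundary E \<Longrightarrow> ray_to E x \<omega> i = ray_to E x \<omega> j \<Longrightarrow> i = j"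
  using R_tdist by metis

lemma R_prefix:
  assumes "\<omega> \<in> boundary E" "\<eta> \<in> boundary E" "ray_to E x \<omega> k = ray_to E x \<eta> k" "j \<le> k"
  shows "ray_to E x \<omega> j = ray_to E x \<eta> j"
  using unique_nb[of "ray_to E x \<omega>" k "ray_to E x \<eta>" k]
    ray_walk[OF R_ray[OF assms(1)]] ray_nb[OF R_ray[OF assms(1)]]
    ray_walk[OF R_ray[OF assms(2)]] ray_nb[OF R_ray[OF assms(2)]]
    assms R_0 by auto

lemma R_concat:
  assumes "\<omega> \<in> boundary E" "walk E p k" "nonbacktracking p k" "p k = z"
    "0 < k \<Longrightarrow> p (k - 1) \<noteq> ray_to E z \<omega> 1"
  shows "ray_to E (p 0) \<omega> i = (if i \<le> k then p i else ray_to E z \<omega> (i - k))"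
proof -
  let ?rz = "ray_to E z \<omega>"
  define r where "r i = (if i \<le> k then p i else ?rz (i - k))" for i
  have rd: "r i = ?rz (i - k)" if "k \<le> i" for i
    using that assms(4) R_0[OF assms(1)] unfolding r_def by (cases "i = k") auto
  have "is_ray E r"
    unfolding is_ray_def
  proof (intro allI conjI)
    fix i
    show "E (r i) (r (Suc i))"
    proof (cases "i < k")
      case True then show ?thesis using assms(2) unfolding r_def walk_def by auto
    next
      case False
      then have "E (?rz (i - k)) (?rz (Suc (i - k)))" using R_E[OF assms(1)] by blast
      moreover have "Suc (i - k) = Suc i - k" using False by arith
      ultimately show ?thesis using rd[of i] rd[of "Suc i"] False by auto
    qed
    show "r (i + 2) \<noteq> r i"
    proof (cases "i + 2 \<le> k")
      case True then show ?thesis using assms(3) unfolding r_def nonbacktracking_def by auto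
    next
      case F: False
      show ?thesis
      proof (cases "k \<le> i")
        case True
        then have "?rz (i - k + 2) \<noteq> ?rz (i - k)" using R_nb[OF assms(1)] by blast
        moreover have "i - k + 2 = i + 2 - k" using True by arith
        ultimately show ?thesis using rd[of i] rd[of "i+2"] True by auto
      next
        case False
        then have "i = k - 1" "k \<ge> 1" using F by arith+
        moreover have "i + 2 - k = 1" using \<open>i = k - 1\<close> \<open>k \<ge> 1\<close> by arith
        ultimately show ?thesis using rd[of "i+2"] assms(5) unfolding r_def by auto
      qed
    qed
  qed
  moreover have "ray_equiv ?rz r"
    unfolding ray_equiv_def by (rule exI[of _ 0], rule exI[of _ k]) (auto simp: rd)
  ultimately have "r \<in> \<omega>" using bdry_closed[OF assms(1) R_mem[OF assms(1)]] by blast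
  then have "ray_to E (p 0) \<omega> = r" using R_unique[OF assms(1)] unfolding r_def by simp
  then show ?thesis unfolding r_def by simp
qed

lemma R_pair: "\<omega> \<in> boundary E \<Longrightarrow> \<exists>k m. ray_to E a \<omega> k = ray_to E b \<omega> m"
  using bdry_equiv[OF _ R_mem R_mem, of \<omega> a b] unfolding ray_equiv_def by (metis add_0)

lemma R_meet_shift: "\<omega> \<in> boundary E \<Longrightarrow> ray_to E a \<omega> k = ray_to E b \<omega> m \<Longrightarrow>
   ray_to E a \<omega> (k + j) = ray_to E b \<omega> (m + j)"
  using R_shift by metis

end

context tree begin

lemma min_pair:
  assumes "\<omega> \<in> boundary E" "ray_to E a \<omega> k = ray_to E b \<omega> m"
  shows "\<exists>k0 m0. ray_to E a \<omega> k0 = ray_to E b \<omega> m0 \<and> int k0 - int m0 = int k - int m \<and>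
     (k0 = 0 \<or> m0 = 0 \<or> ray_to E a \<omega> (k0 - 1) \<noteq> ray_to E b \<omega> (m0 - 1))"
  using assms(2)
proof (induction k arbitrary: m)
  case 0 then show ?case by blast
next
  case (Suc k)
  show ?case
  proof (cases "m = 0 \<or> ray_to E a \<omega> k \<noteq> ray_to E b \<omega> (m - 1)")
    case True then show ?thesis using Suc.prems by fastforce
  next
    case False
    then have "ray_to E a \<omega> k = ray_to E b \<omega> (m - 1)" "m \<ge> 1" by auto
    from Suc.IH[OF this(1)] obtain k0 m0 where "ray_to E a \<omega> k0 = ray_to E b \<omega> m0"
      "int k0 - int m0 = int k - int (m - 1)"
      "k0 = 0 \<or> m0 = 0 \<or> ray_to E a \<omega> (k0 - 1) \<noteq> ray_to E b \<omega> (m0 - 1)" by blast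
    moreover have "int (m - 1) = int m - 1" using \<open>m \<ge> 1\<close> by simp
    ultimately show ?thesis by (intro exI[of _ k0] exI[of _ m0]) auto
  qed
qed

lemma rayset_shift: "\<omega> \<in> boundary E \<Longrightarrow> rayset E (ray_to E x \<omega> k) \<omega> = range (\<lambda>j. ray_to E x \<omega> (k + j))"
  unfolding rayset_def using R_shift by auto

lemma rayset_inj:
  assumes "\<omega> \<in> boundary E" "rayset E y' \<omega> = rayset E y \<omega>"
  shows "y' = y"
proof -
  have "y' \<in> rayset E y \<omega>" using assms R_0[OF assms(1), of y'] unfolding rayset_def by (metis rangeI)
  then obtain i where i: "y' = ray_to E y \<omega> i" unfolding rayset_def by auto
  have "y \<in> rayset E y' \<omega>" using assms R_0[OF assms(1), of y] unfolding rayset_def by (metis rangeI)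
  then obtain j where "y = ray_to E y \<omega> (i + j)" using rayset_shift[OF assms(1), of y i] i by auto
  then have "ray_to E y \<omega> 0 = ray_to E y \<omega> (i + j)" using R_0[OF assms(1)] by simp
  then have "i = 0" using R_inj[OF assms(1)] by force
  then show ?thesis using i R_0[OF assms(1)] by simp
qed

lemma horo_pair:
  assumes "\<omega> \<in> boundary E" "ray_to E a \<omega> k = ray_to E b \<omega> m"
  shows "horo E a b \<omega> = int k - int m"
proof -
  obtain k0 m0 where km: "ray_to E a \<omega> k0 = ray_to E b \<omega> m0" "int k0 - int m0 = int k - int m"
    "k0 = 0 \<or> m0 = 0 \<or> ray_to E a \<omega> (k0 - 1) \<noteq> ray_to E b \<omega> (m0 - 1)"
    using min_pair[OF assms] by blast
  define y where "y = ray_to E a \<omega> k0"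
  have eq: "rayset E a \<omega> \<inter> rayset E b \<omega> = rayset E y \<omega>"
  proof
    show "rayset E y \<omega> \<subseteq> rayset E a \<omega> \<inter> rayset E b \<omega>"
    proof
      fix v assume "v \<in> rayset E y \<omega>"
      then obtain j where j: "v = ray_to E a \<omega> (k0 + j)" unfolding y_def rayset_shift[OF assms(1)] by auto
      then have "v = ray_to E b \<omega> (m0 + j)" using R_meet_shift[OF assms(1) km(1)] by simp
      then have "v \<in> rayset E b \<omega>" unfolding rayset_def by (metis rangeI)
      moreover have "v \<in> rayset E a \<omega>" using j unfolding rayset_def by (metis rangeI)
      ultimately show "v \<in> rayset E a \<omega> \<inter> rayset E b \<omega>" by blast
    qed
  next
    show "rayset E a \<omega> \<inter> rayset E b \<omega> \<subseteq> rayset E y \<omega>"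
    proof
      fix v assume "v \<in> rayset E a \<omega> \<inter> rayset E b \<omega>"
      then have va: "v \<in> range (ray_to E a \<omega>)" and vb: "v \<in> range (ray_to E b \<omega>)" unfolding rayset_def by auto
      obtain i where i: "v = ray_to E a \<omega> i" using va by (rule rangeE)
      obtain j where j: "v = ray_to E b \<omega> j" using vb by (rule rangeE)
      note ij = i j
      have "k0 \<le> i"
      proof (rule ccontr)
        assume "\<not> k0 \<le> i"
        then have lt: "i < k0" by simp
        have "ray_to E b \<omega> (j + (k0 - i)) = ray_to E a \<omega> (i + (k0 - i))"
          using R_meet_shift[OF assms(1), of a i b j "k0 - i"] ij by simp
        also have "\<dots> = ray_to E b \<omega> m0" using lt km(1) by simp
        finally have m0: "j + (k0 - i) = m0" using R_inj[OF assms(1)] by blast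
        have "ray_to E a \<omega> (i + (k0 - 1 - i)) = ray_to E b \<omega> (j + (k0 - 1 - i))"
          using R_meet_shift[OF assms(1), of a i b j "k0 - 1 - i"] ij by simp
        moreover have "i + (k0 - 1 - i) = k0 - 1" "j + (k0 - 1 - i) = m0 - 1" using lt m0 by arith+
        ultimately have "ray_to E a \<omega> (k0 - 1) = ray_to E b \<omega> (m0 - 1)" by simp
        moreover have "k0 \<noteq> 0" "m0 \<noteq> 0" using lt m0 by arith+
        ultimately show False using km(3) by simp
      qed
      then have "v = ray_to E a \<omega> (k0 + (i - k0))" using ij by simp
      then show "v \<in> rayset E y \<omega>" unfolding y_def rayset_shift[OF assms(1)] by auto
    qed
  qed
  have "(THE y'. rayset E a \<omega> \<inter> rayset E b \<omega> = rayset E y' \<omega>) = y"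
    using eq rayset_inj[OF assms(1)] by (intro the_equality) auto
  moreover have "tdist E a y = k0" unfolding y_def using R_tdist[OF assms(1)] .
  moreover have "tdist E b y = m0" unfolding y_def km(1) using R_tdist[OF assms(1)] .
  ultimately show ?thesis unfolding horo_def Let_def using km(2) by simp
qed

lemma horo_cocycle:
  assumes "\<omega> \<in> boundary E"
  shows "horo E a c \<omega> = horo E a b \<omega> + horo E b c \<omega>"
proof -
  obtain k1 m1 where 1: "ray_to E a \<omega> k1 = ray_to E b \<omega> m1" using R_pair[OF assms] by blast
  obtain k2 m2 where 2: "ray_to E b \<omega> k2 = ray_to E c \<omega> m2" using R_pair[OF assms] by blast
  have "ray_to E a \<omega> (k1 + k2) = ray_to E b \<omega> (m1 + k2)" using R_meet_shift[OF assms 1] by simp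
  also have "\<dots> = ray_to E c \<omega> (m2 + m1)" using R_meet_shift[OF assms 2, of m1] by (simp add: ac_simps)
  finally have 3: "ray_to E a \<omega> (k1 + k2) = ray_to E c \<omega> (m2 + m1)" .
  show ?thesis using horo_pair[OF assms 1] horo_pair[OF assms 2] horo_pair[OF assms 3] by simp
qed

lemma horo_ray_shift:
  assumes "\<omega> \<in> boundary E"
  shows "horo E o' x \<omega> = horo E o' (ray_to E x \<omega> n) \<omega> - int n"
proof -
  have "ray_to E (ray_to E x \<omega> n) \<omega> 0 = ray_to E x \<omega> n" using R_0[OF assms] .
  then have "horo E (ray_to E x \<omega> n) x \<omega> = int 0 - int n" by (rule horo_pair[OF assms])
  then show ?thesis using horo_cocycle[OF assms, of o' x "ray_to E x \<omega> n"] by simp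
qed

lemma GL:
  assumes "\<omega> \<in> boundary E"
  shows "\<exists>K. \<forall>\<eta>\<in>boundary E. ray_to E o' \<eta> K = ray_to E o' \<omega> K \<longrightarrow>
            (\<forall>j\<le>k. ray_to E x \<eta> j = ray_to E x \<omega> j)"
proof -
  obtain k1 m1 where 1: "ray_to E o' \<omega> k1 = ray_to E x \<omega> m1" using R_pair[OF assms] by blast
  define v where "v = ray_to E o' \<omega> (k1 + k)"
  have v2: "v = ray_to E x \<omega> (m1 + k)" using R_meet_shift[OF assms 1] v_def by simp
  show ?thesis
  proof (rule exI[of _ "k1 + k + 1"], intro ballI impI allI)
    fix \<eta> j assume \<eta>: "\<eta> \<in> boundary E" and eqK: "ray_to E o' \<eta> (k1 + k + 1) = ray_to E o' \<omega> (k1 + k + 1)"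
      and j: "j \<le> k"
    have v\<eta>: "ray_to E o' \<eta> (k1 + k) = v" using R_prefix[OF \<eta> assms eqK] v_def by simp
    let ?p = "ray_to E x \<omega>"
    have "ray_to E v \<eta> 1 = ray_to E o' \<eta> (k1 + k + 1)" using R_shift[OF \<eta>, of o' "k1+k" 1] v\<eta> by simp
    also have "\<dots> = ray_to E o' \<omega> (k1 + k + 1)" using eqK .
    also have "\<dots> = ray_to E v \<omega> 1" using R_shift[OF assms, of o' "k1+k" 1] v_def by simp
    also have "\<dots> = ?p (m1 + k + 1)" using R_shift[OF assms, of x "m1+k" 1] v2 by simp
    finally have vv: "ray_to E v \<eta> 1 = ?p (m1 + k + 1)" .
    have junc: "?p (m1 + k - 1) \<noteq> ray_to E v \<eta> 1" if "0 < m1 + k"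
    proof -
      have "?p (m1 + k - 1 + 2) \<noteq> ?p (m1 + k - 1)" using R_nb[OF assms] .
      moreover have "m1 + k - 1 + 2 = m1 + k + 1" using that by arith
      ultimately show ?thesis using vv by simp
    qed
    have "ray_to E (?p 0) \<eta> j = (if j \<le> m1 + k then ?p j else ray_to E v \<eta> (j - (m1 + k)))"
      by (rule R_concat[OF \<eta> ray_walk[OF R_ray[OF assms]] ray_nb[OF R_ray[OF assms]] v2[symmetric] junc])
    then show "ray_to E x \<eta> j = ray_to E x \<omega> j" using j R_0[OF assms] by simp
  qed
qed

definition lcat :: "'v \<Rightarrow> ('v bdry \<Rightarrow> 'b) \<Rightarrow> bool" where
  "lcat o' f \<longleftrightarrow> (\<forall>\<omega>\<in>boundary E. \<exists>K. \<forall>\<eta>\<in>boundary E. ray_to E o' \<eta> K = ray_to E o' \<omega> K \<longrightarrow> f \<eta> = f \<omega>)"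

lemma lc_iff: "loc_const E f \<longleftrightarrow> lcat o' f"
proof
  assume lc: "loc_const E f"
  show "lcat o' f" unfolding lcat_def
  proof
    fix \<omega> assume \<omega>: "\<omega> \<in> boundary E"
    obtain x y where c: "\<omega> \<in> cone E x y" "\<forall>\<eta>\<in>cone E x y. f \<eta> = f \<omega>"
      using lc \<omega> unfolding loc_const_def by blast
    have "y \<in> range (ray_to E x \<omega>)" using c(1) unfolding cone_def rayset_def by simp
    then obtain i where i: "y = ray_to E x \<omega> i" by (rule rangeE)
    obtain K where K: "\<forall>\<eta>\<in>boundary E. ray_to E o' \<eta> K = ray_to E o' \<omega> K \<longrightarrow>
            (\<forall>j\<le>i. ray_to E x \<eta> j = ray_to E x \<omega> j)" using GL[OF \<omega>] by blast
    show "\<exists>K. \<forall>\<eta>\<in>boundary E. ray_to E o' \<eta> K = ray_to E o' \<omega> K \<longrightarrow> f \<eta> = f \<omega>"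
    proof (rule exI[of _ K], intro ballI impI)
      fix \<eta> assume "\<eta> \<in> boundary E" "ray_to E o' \<eta> K = ray_to E o' \<omega> K"
      then have "\<forall>j\<le>i. ray_to E x \<eta> j = ray_to E x \<omega> j" using K by blast
      then have "ray_to E x \<eta> i = y" using i by simp
      then have "y \<in> range (ray_to E x \<eta>)" by (metis rangeI)
      then have "\<eta> \<in> cone E x y" using \<open>\<eta> \<in> boundary E\<close> unfolding cone_def rayset_def by simp
      then show "f \<eta> = f \<omega>" using c by blast
    qed
  qed
next
  assume lc: "lcat o' f"
  show "loc_const E f" unfolding loc_const_def
  proof
    fix \<omega> assume \<omega>: "\<omega> \<in> boundary E"
    obtain K where K: "\<forall>\<eta>\<in>boundary E. ray_to E o' \<eta> K = ray_to E o' \<omega> K \<longrightarrow> f \<eta> = f \<omega>"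
      using lc \<omega> unfolding lcat_def by blast
    have "ray_to E o' \<omega> K \<in> range (ray_to E o' \<omega>)" by (rule rangeI)
    then have "\<omega> \<in> cone E o' (ray_to E o' \<omega> K)" using \<omega> unfolding cone_def rayset_def by simp
    moreover have "\<forall>\<eta>\<in>cone E o' (ray_to E o' \<omega> K). f \<eta> = f \<omega>"
    proof
      fix \<eta> assume "\<eta> \<in> cone E o' (ray_to E o' \<omega> K)"
      then have \<eta>: "\<eta> \<in> boundary E" and "ray_to E o' \<omega> K \<in> range (ray_to E o' \<eta>)"
        unfolding cone_def rayset_def by simp_all
      obtain i where i: "ray_to E o' \<omega> K = ray_to E o' \<eta> i"
        using \<open>ray_to E o' \<omega> K \<in> range (ray_to E o' \<eta>)\<close> by (rule rangeE)
      then have "i = K" using R_tdist[OF \<eta>, of o' i] R_tdist[OF \<omega>, of o' K] by simp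
      then show "f \<eta> = f \<omega>" using K \<eta> i by auto
    qed
    ultimately show "\<exists>x y. \<omega> \<in> cone E x y \<and> (\<forall>\<eta>\<in>cone E x y. f \<eta> = f \<omega>)" by blast
  qed
qed

lemma lcat_comb: "lcat o' f \<Longrightarrow> lcat o' g \<Longrightarrow> lcat o' (\<lambda>\<omega>. h (f \<omega>) (g \<omega>))"
  unfolding lcat_def
proof (intro ballI)
  fix \<omega> assume f: "\<forall>\<omega>\<in>boundary E. \<exists>K. \<forall>\<eta>\<in>boundary E. ray_to E o' \<eta> K = ray_to E o' \<omega> K \<longrightarrow> f \<eta> = f \<omega>"
    and g: "\<forall>\<omega>\<in>boundary E. \<exists>K. \<forall>\<eta>\<in>boundary E. ray_to E o' \<eta> K = ray_to E o' \<omega> K \<longrightarrow> g \<eta> = g \<omega>"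
    and \<omega>: "\<omega> \<in> boundary E"
  obtain K1 where K1: "\<forall>\<eta>\<in>boundary E. ray_to E o' \<eta> K1 = ray_to E o' \<omega> K1 \<longrightarrow> f \<eta> = f \<omega>" using f \<omega> by blast
  obtain K2 where K2: "\<forall>\<eta>\<in>boundary E. ray_to E o' \<eta> K2 = ray_to E o' \<omega> K2 \<longrightarrow> g \<eta> = g \<omega>" using g \<omega> by blast
  show "\<exists>K. \<forall>\<eta>\<in>boundary E. ray_to E o' \<eta> K = ray_to E o' \<omega> K \<longrightarrow> h (f \<eta>) (g \<eta>) = h (f \<omega>) (g \<omega>)"
  proof (rule exI[of _ "max K1 K2"], intro ballI impI)
    fix \<eta> assume \<eta>: "\<eta> \<in> boundary E" and eq: "ray_to E o' \<eta> (max K1 K2) = ray_to E o' \<omega> (max K1 K2)"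
    have "ray_to E o' \<eta> K1 = ray_to E o' \<omega> K1" "ray_to E o' \<eta> K2 = ray_to E o' \<omega> K2"
      using R_prefix[OF \<eta> \<omega> eq] by auto
    then show "h (f \<eta>) (g \<eta>) = h (f \<omega>) (g \<omega>)" using K1 K2 \<eta> by auto
  qed
qed

lemma lc_comb: "loc_const E f \<Longrightarrow> loc_const E g \<Longrightarrow> loc_const E (\<lambda>\<omega>. h (f \<omega>) (g \<omega>))"
  using lcat_comb lc_iff by blast

lemma lc_const: "loc_const E (\<lambda>\<omega>. c)"
  unfolding loc_const_def
proof (intro ballI)
  fix \<omega> assume \<omega>: "\<omega> \<in> boundary E"
  fix x
  have "x \<in> rayset E x \<omega>" unfolding rayset_def using R_0[OF \<omega>, of x] by (metis rangeI)
  then have "\<omega> \<in> cone E x x" unfolding cone_def using \<omega> by simp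
  then show "\<exists>x y. \<omega> \<in> cone E x y \<and> (\<forall>\<eta>\<in>cone E x y. c = c)" by blast
qed

lemma lc_comp: "loc_const E f \<Longrightarrow> loc_const E (\<lambda>\<omega>. h (f \<omega>))"
  using lc_comb[OF _ lc_const, of f "\<lambda>a b. h a"] by simp

lemma lc_mult: "loc_const E f \<Longrightarrow> loc_const E g \<Longrightarrow> loc_const E (\<lambda>\<omega>. f \<omega> * g \<omega>)"
  by (rule lc_comb)
lemma lc_add: "loc_const E f \<Longrightarrow> loc_const E g \<Longrightarrow> loc_const E (\<lambda>\<omega>. f \<omega> + g \<omega>)"
  by (rule lc_comb)

lemma lc_sum: "finite S \<Longrightarrow> (\<And>i. i \<in> S \<Longrightarrow> loc_const E (f i)) \<Longrightarrow> loc_const E (\<lambda>\<omega>. \<Sum>i\<in>S. f i \<omega>)"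
proof (induction S rule: finite_induct)
  case empty then show ?case using lc_const by simp
next
  case (insert x F) then show ?case using lc_add[of "f x" "\<lambda>\<omega>. \<Sum>i\<in>F. f i \<omega>"] by simp
qed

lemma lc_sum_list: "(\<And>i. i \<in> set L \<Longrightarrow> loc_const E (f i)) \<Longrightarrow> loc_const E (\<lambda>\<omega>. \<Sum>i\<leftarrow>L. f i \<omega>)"
proof (induction L)
  case Nil then show ?case using lc_const by simp
next
  case (Cons x L) then show ?case using lc_add[of "f x" "\<lambda>\<omega>. \<Sum>i\<leftarrow>L. f i \<omega>"] by simp
qed

lemma lcat_R: "lcat o' (\<lambda>\<omega>. ray_to E x \<omega> k)"
  unfolding lcat_def using GL by blast

lemma lcat_dep: "lcat o' f \<Longrightarrow> (\<And>y. lcat o' (g y)) \<Longrightarrow> lcat o' (\<lambda>\<omega>. g (f \<omega>) \<omega>)"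
  unfolding lcat_def
proof (intro ballI)
  fix \<omega> assume f: "\<forall>\<omega>\<in>boundary E. \<exists>K. \<forall>\<eta>\<in>boundary E. ray_to E o' \<eta> K = ray_to E o' \<omega> K \<longrightarrow> f \<eta> = f \<omega>"
    and g: "\<And>y. \<forall>\<omega>\<in>boundary E. \<exists>K. \<forall>\<eta>\<in>boundary E. ray_to E o' \<eta> K = ray_to E o' \<omega> K \<longrightarrow> g y \<eta> = g y \<omega>"
    and \<omega>: "\<omega> \<in> boundary E"
  obtain K1 where K1: "\<forall>\<eta>\<in>boundary E. ray_to E o' \<eta> K1 = ray_to E o' \<omega> K1 \<longrightarrow> f \<eta> = f \<omega>" using f \<omega> by blast
  obtain K2 where K2: "\<forall>\<eta>\<in>boundary E. ray_to E o' \<eta> K2 = ray_to E o' \<omega> K2 \<longrightarrow> g (f \<omega>) \<eta> = g (f \<omega>) \<omega>" using g \<omega> by blast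
  show "\<exists>K. \<forall>\<eta>\<in>boundary E. ray_to E o' \<eta> K = ray_to E o' \<omega> K \<longrightarrow> g (f \<eta>) \<eta> = g (f \<omega>) \<omega>"
  proof (rule exI[of _ "max K1 K2"], intro ballI impI)
    fix \<eta> assume \<eta>: "\<eta> \<in> boundary E" and eq: "ray_to E o' \<eta> (max K1 K2) = ray_to E o' \<omega> (max K1 K2)"
    have "ray_to E o' \<eta> K1 = ray_to E o' \<omega> K1" "ray_to E o' \<eta> K2 = ray_to E o' \<omega> K2"
      using R_prefix[OF \<eta> \<omega> eq] by auto
    then show "g (f \<eta>) \<eta> = g (f \<omega>) \<omega>" using K1 K2 \<eta> by auto
  qed
qed

lemma lcat_horo: "lcat o' (\<lambda>\<omega>. horo E a b \<omega>)"
  unfolding lcat_def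
proof
  fix \<omega> assume \<omega>: "\<omega> \<in> boundary E"
  obtain k m where km: "ray_to E a \<omega> k = ray_to E b \<omega> m" using R_pair[OF \<omega>] by blast
  obtain K where K: "\<forall>\<eta>\<in>boundary E. ray_to E o' \<eta> K = ray_to E o' \<omega> K \<longrightarrow>
            (\<forall>j\<le>m. ray_to E b \<eta> j = ray_to E b \<omega> j)" using GL[OF \<omega>] by blast
  obtain K' where K': "\<forall>\<eta>\<in>boundary E. ray_to E o' \<eta> K' = ray_to E o' \<omega> K' \<longrightarrow>
            (\<forall>j\<le>k. ray_to E a \<eta> j = ray_to E a \<omega> j)" using GL[OF \<omega>] by blast
  show "\<exists>K. \<forall>\<eta>\<in>boundary E. ray_to E o' \<eta> K = ray_to E o' \<omega> K \<longrightarrow> horo E a b \<eta> = horo E a b \<omega>"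
  proof (rule exI[of _ "max K K'"], intro ballI impI)
    fix \<eta> assume \<eta>: "\<eta> \<in> boundary E" and eq: "ray_to E o' \<eta> (max K K') = ray_to E o' \<omega> (max K K')"
    have "ray_to E o' \<eta> K = ray_to E o' \<omega> K" "ray_to E o' \<eta> K' = ray_to E o' \<omega> K'"
      using R_prefix[OF \<eta> \<omega> eq] by auto
    then have "ray_to E a \<eta> k = ray_to E b \<eta> m" using K K' \<eta> km by auto
    then show "horo E a b \<eta> = horo E a b \<omega>" using horo_pair[OF \<eta>] horo_pair[OF \<omega> km] by simp
  qed
qed

lemma lc_horo: "loc_const E (\<lambda>\<omega>. h (horo E a b \<omega>))"
proof -
  have "lcat a (\<lambda>\<omega>. h (horo E a b \<omega>))"
    using lcat_comb[OF lcat_horo[of a a b] lcat_horo[of a a b], where h = "\<lambda>u v. h u"] by simp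
  then show ?thesis using lc_iff by blast
qed

lemma lc_poisson: "loc_const E (\<lambda>\<omega>. poisson q E o' s x \<omega>)"
  unfolding poisson_def by (rule lc_horo)

end

context tree begin

definition aut :: "('v \<Rightarrow> 'v) \<Rightarrow> bool" where
  "aut g \<longleftrightarrow> bij g \<and> (\<forall>x y. E (g x) (g y) \<longleftrightarrow> E x y)"

lemma aut_inj: "aut g \<Longrightarrow> inj g" unfolding aut_def bij_def by blast
lemma aut_E: "aut g \<Longrightarrow> E (g x) (g y) \<longleftrightarrow> E x y" unfolding aut_def by blast
lemma aut_inv_cancel: "aut g \<Longrightarrow> inv g (g x) = x" using aut_inj by (simp add: inv_f_f)
lemma aut_cancel_inv: "aut g \<Longrightarrow> g (inv g x) = x" unfolding aut_def by (meson bij_inv_eq_iff)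

lemma aut_inv: "aut g \<Longrightarrow> aut (inv g)"
  unfolding aut_def
proof (intro conjI allI)
  assume a: "bij g \<and> (\<forall>x y. E (g x) (g y) = E x y)"
  then show "bij (inv g)" using bij_imp_bij_inv by blast
  fix x y
  have "E (inv g x) (inv g y) = E (g (inv g x)) (g (inv g y))" using a by blast
  also have "\<dots> = E x y" using a surj_f_inv_f[OF bij_is_surj] by metis
  finally show "E (inv g x) (inv g y) = E x y" .
qed

lemma aut_ray: "aut g \<Longrightarrow> is_ray E r \<Longrightarrow> is_ray E (g \<circ> r)"
  unfolding is_ray_def using aut_E aut_inj by (auto simp: inj_eq)

lemma aut_equiv: "ray_equiv r r' \<Longrightarrow> ray_equiv (g \<circ> r) (g \<circ> r')"
proof -
  assume "ray_equiv r r'"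
  then obtain k m where "\<forall>n. r (n + k) = r' (n + m)" unfolding ray_equiv_def by blast
  then show ?thesis unfolding ray_equiv_def by (intro exI[of _ k] exI[of _ m]) simp
qed

lemma bact_comp: "bact h (bact g \<omega>) = bact (h \<circ> g) \<omega>"
  unfolding bact_def by (auto simp: image_image comp_assoc)

lemma bact_inv: "aut g \<Longrightarrow> bact (inv g) (bact g \<omega>) = \<omega>"
proof -
  assume a: "aut g"
  have "inv g \<circ> g = id" using aut_inj[OF a] by simp
  then show ?thesis unfolding bact_comp unfolding bact_def by simp
qed

lemma bact_inv2: "aut g \<Longrightarrow> bact g (bact (inv g) \<omega>) = \<omega>"
proof -
  assume a: "aut g"
  have "g \<circ> inv g = id" using aut_cancel_inv[OF a] by auto
  then show ?thesis unfolding bact_comp unfolding bact_def by simp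
qed

lemma aut_bdry: assumes "aut g" "\<omega> \<in> boundary E" shows "bact g \<omega> \<in> boundary E"
proof -
  obtain r0 where r0: "is_ray E r0" "\<omega> = {r'. is_ray E r' \<and> ray_equiv r0 r'}"
    using assms(2) by (rule bdry_cases)
  have "bact g \<omega> = {r''. is_ray E r'' \<and> ray_equiv (g \<circ> r0) r''}"
  proof
    show "bact g \<omega> \<subseteq> {r''. is_ray E r'' \<and> ray_equiv (g \<circ> r0) r''}"
    proof
      fix r'' assume "r'' \<in> bact g \<omega>"
      then obtain r' where r': "r' \<in> \<omega>" "r'' = g \<circ> r'" unfolding bact_def by (rule imageE)
      then have "is_ray E r'" "ray_equiv r0 r'" using r0(2) by simp_all
      then show "r'' \<in> {r''. is_ray E r'' \<and> ray_equiv (g \<circ> r0) r''}"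
        using aut_ray[OF assms(1)] aut_equiv r'(2) by simp
    qed
  next
    show "{r''. is_ray E r'' \<and> ray_equiv (g \<circ> r0) r''} \<subseteq> bact g \<omega>"
    proof
      fix r'' assume "r'' \<in> {r''. is_ray E r'' \<and> ray_equiv (g \<circ> r0) r''}"
      then have h: "is_ray E r''" "ray_equiv (g \<circ> r0) r''" by auto
      have "is_ray E (inv g \<circ> r'')" using aut_ray[OF aut_inv[OF assms(1)] h(1)] .
      moreover have "ray_equiv (inv g \<circ> (g \<circ> r0)) (inv g \<circ> r'')" using aut_equiv[OF h(2)] .
      moreover have "inv g \<circ> (g \<circ> r0) = r0" using aut_inv_cancel[OF assms(1)] by auto
      ultimately have mem: "inv g \<circ> r'' \<in> \<omega>" unfolding r0(2) by simp
      have eq: "r'' = g \<circ> (inv g \<circ> r'')" using aut_cancel_inv[OF assms(1)] by auto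
      show "r'' \<in> bact g \<omega>" unfolding bact_def by (rule image_eqI[of r'' "(\<circ>) g" "inv g \<circ> r''" \<omega>, OF eq mem])
    qed
  qed
  then have "\<exists>r. bact g \<omega> = {r'. is_ray E r' \<and> ray_equiv r r'} \<and> is_ray E r"
    using aut_ray[OF assms(1) r0(1)] by (intro exI[of _ "g \<circ> r0"]) simp
  then show ?thesis unfolding boundary_def by simp
qed

lemma R_aut: assumes "aut g" "\<omega> \<in> boundary E"
  shows "ray_to E (g x) (bact g \<omega>) = g \<circ> ray_to E x \<omega>"
proof (rule R_unique[OF aut_bdry[OF assms]])
  show "g \<circ> ray_to E x \<omega> \<in> bact g \<omega>" unfolding bact_def using R_mem[OF assms(2)] by (rule imageI)
  show "(g \<circ> ray_to E x \<omega>) 0 = g x" using R_0[OF assms(2)] by simp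
qed

lemma horo_aut: assumes "aut g" "\<omega> \<in> boundary E"
  shows "horo E (g a) (g b) (bact g \<omega>) = horo E a b \<omega>"
proof -
  obtain k m where km: "ray_to E a \<omega> k = ray_to E b \<omega> m" using R_pair[OF assms(2)] by blast
  then have "ray_to E (g a) (bact g \<omega>) k = ray_to E (g b) (bact g \<omega>) m"
    using R_aut[OF assms] by simp
  then show ?thesis using horo_pair[OF aut_bdry[OF assms]] horo_pair[OF assms(2) km] by simp
qed

lemma horo_aut2: assumes "aut g" "\<omega> \<in> boundary E"
  shows "horo E o' (g x) (bact g \<omega>) = horo E o' (g o') (bact g \<omega>) + horo E o' x \<omega>"
proof -
  have 1: "horo E o' (g x) (bact g \<omega>) = horo E o' (g o') (bact g \<omega>) + horo E (g o') (g x) (bact g \<omega>)"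
    by (rule horo_cocycle[OF aut_bdry[OF assms]])
  have 2: "horo E (g o') (g x) (bact g \<omega>) = horo E o' x \<omega>" by (rule horo_aut[OF assms])
  show ?thesis using 1 2 by simp
qed

lemma lc_bact: assumes "aut g" "loc_const E f" shows "loc_const E (\<lambda>\<omega>. f (bact g \<omega>))"
proof -
  fix o' :: 'v
  have f: "lcat (g o') f" using assms(2) lc_iff[of f "g o'"] by simp
  have "lcat o' (\<lambda>\<omega>. f (bact g \<omega>))"
    unfolding lcat_def
  proof
    fix \<omega> assume \<omega>: "\<omega> \<in> boundary E"
    have "\<exists>K. \<forall>\<eta>\<in>boundary E. ray_to E (g o') \<eta> K = ray_to E (g o') (bact g \<omega>) K \<longrightarrow> f \<eta> = f (bact g \<omega>)"
      using f aut_bdry[OF assms(1) \<omega>] unfolding lcat_def by (rule bspec)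
    then obtain K where K: "\<forall>\<eta>\<in>boundary E. ray_to E (g o') \<eta> K = ray_to E (g o') (bact g \<omega>) K \<longrightarrow> f \<eta> = f (bact g \<omega>)"
      by (elim exE)
    show "\<exists>K. \<forall>\<eta>\<in>boundary E. ray_to E o' \<eta> K = ray_to E o' \<omega> K \<longrightarrow> f (bact g \<eta>) = f (bact g \<omega>)"
    proof (rule exI[of _ K], intro ballI impI)
      fix \<eta> assume \<eta>: "\<eta> \<in> boundary E" "ray_to E o' \<eta> K = ray_to E o' \<omega> K"
      then have "ray_to E (g o') (bact g \<eta>) K = ray_to E (g o') (bact g \<omega>) K"
        using R_aut[OF assms(1) \<eta>(1)] R_aut[OF assms(1) \<omega>] by simp
      then show "f (bact g \<eta>) = f (bact g \<omega>)" using K[rule_format, OF aut_bdry[OF assms(1) \<eta>(1)]] by simp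
    qed
  qed
  then show ?thesis using lc_iff[of "\<lambda>\<omega>. f (bact g \<omega>)" o'] by simp
qed

lemma dist_cong:
  assumes "distribution E \<mu>" "loc_const E f" "\<And>\<omega>. \<omega> \<in> boundary E \<Longrightarrow> f \<omega> = g \<omega>"
  shows "\<mu> g = \<mu> f"
proof -
  have h: "\<forall>f g. loc_const E f \<and> (\<forall>\<omega>\<in>boundary E. f \<omega> = g \<omega>) \<longrightarrow> \<mu> f = \<mu> g"
    using assms(1) unfolding distribution_def by (elim conjE)
  have "\<mu> f = \<mu> g" using h[rule_format, of f g] assms(2,3) by simp
  then show ?thesis by simp
qed

lemma dist_add:
  assumes "distribution E \<mu>" "loc_const E f" "loc_const E g"
  shows "\<mu> (\<lambda>\<omega>. f \<omega> + g \<omega>) = \<mu> f + \<mu> g"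
proof -
  have h: "\<forall>f g. loc_const E f \<and> loc_const E g \<longrightarrow> \<mu> (\<lambda>\<omega>. f \<omega> + g \<omega>) = \<mu> f + \<mu> g"
    using assms(1) unfolding distribution_def by (elim conjE)
  show ?thesis using h[rule_format, of f g] assms(2,3) by simp
qed

lemma dist_scale:
  assumes "distribution E \<mu>" "loc_const E f"
  shows "\<mu> (\<lambda>\<omega>. c * f \<omega>) = c * \<mu> f"
proof -
  have h: "\<forall>c f. loc_const E f \<longrightarrow> \<mu> (\<lambda>\<omega>. c * f \<omega>) = c * \<mu> f"
    using assms(1) unfolding distribution_def by (elim conjE)
  show ?thesis using h[rule_format, of f c] assms(2) by simp
qed

lemma dist_zero: assumes "distribution E \<mu>" shows "\<mu> (\<lambda>\<omega>. 0) = 0"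
  using dist_scale[OF assms lc_const[of 0], of 0] by simp

lemma lc_cnj: "loc_const E f \<Longrightarrow> loc_const E (\<lambda>\<omega>. cnj (f \<omega>))"
  by (rule lc_comp)
lemma lc_cmult: "loc_const E f \<Longrightarrow> loc_const E (\<lambda>\<omega>. c * f \<omega>)"
  by (rule lc_comp)
lemma lc_sum_list_c: "(\<And>p. p \<in> set L \<Longrightarrow> loc_const E (f p)) \<Longrightarrow> loc_const E (\<lambda>\<omega>. \<Sum>p\<leftarrow>L. c p * f p \<omega>)"
  by (rule lc_sum_list) (rule lc_cmult)

lemma dist_sum_list: "distribution E \<mu> \<Longrightarrow> (\<And>p. p \<in> set L \<Longrightarrow> loc_const E (f p)) \<Longrightarrow>
   \<mu> (\<lambda>\<omega>. \<Sum>p\<leftarrow>L. c p * f p \<omega>) = (\<Sum>p\<leftarrow>L. c p * \<mu> (f p))"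
proof (induction L)
  case Nil then show ?case using dist_zero by simp
next
  case (Cons a L)
  have lca: "loc_const E (f a)" using Cons.prems(2) by simp
  have lc1: "loc_const E (\<lambda>\<omega>. c a * f a \<omega>)" using lc_cmult[OF lca] .
  have lcL: "\<And>p. p \<in> set L \<Longrightarrow> loc_const E (f p)" using Cons.prems(2) by simp
  have lc2: "loc_const E (\<lambda>\<omega>. \<Sum>p\<leftarrow>L. c p * f p \<omega>)" using lc_sum_list_c[OF lcL] .
  have IH: "\<mu> (\<lambda>\<omega>. \<Sum>p\<leftarrow>L. c p * f p \<omega>) = (\<Sum>p\<leftarrow>L. c p * \<mu> (f p))"
    using Cons.IH[OF Cons.prems(1) lcL] .
  have "\<mu> (\<lambda>\<omega>. \<Sum>p\<leftarrow>a # L. c p * f p \<omega>) = \<mu> (\<lambda>\<omega>. c a * f a \<omega> + (\<Sum>p\<leftarrow>L. c p * f p \<omega>))" by simp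
  also have "\<dots> = \<mu> (\<lambda>\<omega>. c a * f a \<omega>) + \<mu> (\<lambda>\<omega>. \<Sum>p\<leftarrow>L. c p * f p \<omega>)"
    using dist_add[OF Cons.prems(1) lc1 lc2] .
  also have "\<dots> = c a * \<mu> (f a) + (\<Sum>p\<leftarrow>L. c p * \<mu> (f p))"
    using dist_scale[OF Cons.prems(1) lca, of "c a"] IH by simp
  finally show ?case by simp
qed

lemma cdist_dist: assumes d: "distribution E \<mu>" shows "distribution E (cdist \<mu>)"
  unfolding distribution_def
proof (intro conjI allI impI)
  fix f g :: "'v bdry \<Rightarrow> complex" assume a: "loc_const E f \<and> (\<forall>\<omega>\<in>boundary E. f \<omega> = g \<omega>)"
  have "\<mu> (\<lambda>\<omega>. cnj (g \<omega>)) = \<mu> (\<lambda>\<omega>. cnj (f \<omega>))"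
    by (rule dist_cong[OF d lc_cnj]) (use a in auto)
  then show "cdist \<mu> f = cdist \<mu> g" unfolding cdist_def by simp
next
  fix f g :: "'v bdry \<Rightarrow> complex" assume a: "loc_const E f \<and> loc_const E g"
  have "\<mu> (\<lambda>\<omega>. cnj (f \<omega> + g \<omega>)) = \<mu> (\<lambda>\<omega>. cnj (f \<omega>) + cnj (g \<omega>))" by simp
  also have "\<dots> = \<mu> (\<lambda>\<omega>. cnj (f \<omega>)) + \<mu> (\<lambda>\<omega>. cnj (g \<omega>))"
    using a by (intro dist_add[OF d] lc_cnj) auto
  finally show "cdist \<mu> (\<lambda>\<omega>. f \<omega> + g \<omega>) = cdist \<mu> f + cdist \<mu> g" unfolding cdist_def by simp
next
  fix c and f :: "'v bdry \<Rightarrow> complex" assume a: "loc_const E f"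
  have "\<mu> (\<lambda>\<omega>. cnj (c * f \<omega>)) = \<mu> (\<lambda>\<omega>. cnj c * cnj (f \<omega>))" by simp
  also have "\<dots> = cnj c * \<mu> (\<lambda>\<omega>. cnj (f \<omega>))" by (rule dist_scale[OF d lc_cnj[OF a]])
  finally show "cdist \<mu> (\<lambda>\<omega>. c * f \<omega>) = c * cdist \<mu> f" unfolding cdist_def by simp
qed

definition sepr :: "('v bdry \<Rightarrow> 'v bdry \<Rightarrow> complex) \<Rightarrow> (('v bdry \<Rightarrow> complex) \<times> ('v bdry \<Rightarrow> complex)) list \<Rightarrow> bool" where
  "sepr F L \<longleftrightarrow> (\<forall>p\<in>set L. loc_const E (fst p) \<and> loc_const E (snd p)) \<and>
     (\<forall>\<omega>\<in>boundary E. \<forall>\<omega>'\<in>boundary E. F \<omega> \<omega>' = (\<Sum>p\<leftarrow>L. fst p \<omega> * snd p \<omega>'))"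

definition sep :: "('v bdry \<Rightarrow> 'v bdry \<Rightarrow> complex) \<Rightarrow> bool" where
  "sep F \<longleftrightarrow> (\<exists>L. sepr F L)"

lemma TI:
  assumes "distribution E \<mu>" "distribution E \<nu>" "sepr F L"
  shows "tensor_int \<mu> \<nu> F = (\<Sum>p\<leftarrow>L. \<mu> (fst p) * \<nu> (snd p))"
proof -
  have lcL: "loc_const E (fst p)" "loc_const E (snd p)" if "p \<in> set L" for p
    using assms(3) that unfolding sepr_def by auto
  have inner: "\<nu> (\<lambda>\<omega>'. F \<omega> \<omega>') = (\<Sum>p\<leftarrow>L. \<nu> (snd p) * fst p \<omega>)" if \<omega>: "\<omega> \<in> boundary E" for \<omega>
  proof -
    have "\<nu> (\<lambda>\<omega>'. F \<omega> \<omega>') = \<nu> (\<lambda>\<omega>'. \<Sum>p\<leftarrow>L. fst p \<omega> * snd p \<omega>')"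
      by (rule dist_cong[OF assms(2) lc_sum_list_c[OF lcL(2)]]) (use assms(3) \<omega> in \<open>auto simp: sepr_def\<close>)
    also have "\<dots> = (\<Sum>p\<leftarrow>L. fst p \<omega> * \<nu> (snd p))"
      by (rule dist_sum_list[OF assms(2)]) (use lcL in auto)
    finally show ?thesis by (simp add: mult.commute)
  qed
  have "tensor_int \<mu> \<nu> F = \<mu> (\<lambda>\<omega>. \<nu> (\<lambda>\<omega>'. F \<omega> \<omega>'))" unfolding tensor_int_def ..
  also have "\<dots> = \<mu> (\<lambda>\<omega>. \<Sum>p\<leftarrow>L. \<nu> (snd p) * fst p \<omega>)"
    by (rule dist_cong[OF assms(1) lc_sum_list_c[OF lcL(1)]]) (use inner in auto)
  also have "\<dots> = (\<Sum>p\<leftarrow>L. \<nu> (snd p) * \<mu> (fst p))"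
    by (rule dist_sum_list[OF assms(1)]) (use lcL in auto)
  finally show ?thesis by (simp add: mult.commute)
qed

lemma sepr_append: "sepr F L1 \<Longrightarrow> sepr G L2 \<Longrightarrow> sepr (\<lambda>\<omega> \<omega>'. F \<omega> \<omega>' + G \<omega> \<omega>') (L1 @ L2)"
  unfolding sepr_def by auto

lemma sepr_zero: "sepr (\<lambda>\<omega> \<omega>'. 0) []"
  unfolding sepr_def by auto

lemma sepr_prod: "loc_const E A \<Longrightarrow> loc_const E B \<Longrightarrow> sepr (\<lambda>\<omega> \<omega>'. A \<omega> * B \<omega>') [(A, B)]"
  unfolding sepr_def by auto

lemma sep_prod: "loc_const E A \<Longrightarrow> loc_const E B \<Longrightarrow> sep (\<lambda>\<omega> \<omega>'. A \<omega> * B \<omega>')"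
  unfolding sep_def using sepr_prod by blast

lemma sep_add: "sep F \<Longrightarrow> sep G \<Longrightarrow> sep (\<lambda>\<omega> \<omega>'. F \<omega> \<omega>' + G \<omega> \<omega>')"
  unfolding sep_def using sepr_append by blast

lemma sep_zero: "sep (\<lambda>\<omega> \<omega>'. 0)"
  unfolding sep_def using sepr_zero by blast

lemma sepr_cong: assumes "sepr F L" "\<And>\<omega> \<omega>'. \<omega> \<in> boundary E \<Longrightarrow> \<omega>' \<in> boundary E \<Longrightarrow> F \<omega> \<omega>' = G \<omega> \<omega>'"
  shows "sepr G L"
proof -
  have "\<forall>p\<in>set L. loc_const E (fst p) \<and> loc_const E (snd p)" using assms(1) unfolding sepr_def by simp
  moreover have "\<forall>\<omega>\<in>boundary E. \<forall>\<omega>'\<in>boundary E. G \<omega> \<omega>' = (\<Sum>p\<leftarrow>L. fst p \<omega> * snd p \<omega>')"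
  proof (intro ballI)
    fix \<omega> \<omega>' assume "\<omega> \<in> boundary E" "\<omega>' \<in> boundary E"
    then show "G \<omega> \<omega>' = (\<Sum>p\<leftarrow>L. fst p \<omega> * snd p \<omega>')"
      using assms(1) assms(2)[of \<omega> \<omega>'] unfolding sepr_def by simp
  qed
  ultimately show ?thesis unfolding sepr_def by blast
qed

lemma sep_cong: "sep F \<Longrightarrow> (\<And>\<omega> \<omega>'. \<omega> \<in> boundary E \<Longrightarrow> \<omega>' \<in> boundary E \<Longrightarrow> F \<omega> \<omega>' = G \<omega> \<omega>') \<Longrightarrow> sep G"
  unfolding sep_def using sepr_cong by blast

lemma sep_sum: "finite S \<Longrightarrow> (\<And>i. i \<in> S \<Longrightarrow> sep (F i)) \<Longrightarrow> sep (\<lambda>\<omega> \<omega>'. \<Sum>i\<in>S. F i \<omega> \<omega>')"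
proof (induction S rule: finite_induct)
  case empty then show ?case using sep_zero by simp
next
  case (insert x S)
  then show ?case using sep_add[of "F x" "\<lambda>\<omega> \<omega>'. \<Sum>i\<in>S. F i \<omega> \<omega>'"] by simp
qed

lemma sep_ml: assumes "loc_const E c" "sep F" shows "sep (\<lambda>\<omega> \<omega>'. c \<omega> * F \<omega> \<omega>')"
proof -
  obtain L where L: "sepr F L" using assms(2) unfolding sep_def by blast
  have "sepr (\<lambda>\<omega> \<omega>'. c \<omega> * F \<omega> \<omega>') (map (\<lambda>p. (\<lambda>\<omega>. c \<omega> * fst p \<omega>, snd p)) L)"
    using L assms(1) unfolding sepr_def
    by (auto simp: sum_list_const_mult o_def mult.assoc intro: lc_mult)
  then show ?thesis unfolding sep_def by blast
qed

lemma sep_mr: assumes "loc_const E c" "sep F" shows "sep (\<lambda>\<omega> \<omega>'. F \<omega> \<omega>' * c \<omega>')"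
proof -
  obtain L where L: "sepr F L" using assms(2) unfolding sep_def by blast
  have "sepr (\<lambda>\<omega> \<omega>'. F \<omega> \<omega>' * c \<omega>') (map (\<lambda>p. (fst p, \<lambda>\<omega>'. snd p \<omega>' * c \<omega>')) L)"
  proof -
    have eq: "(\<Sum>p\<leftarrow>L'. fst p \<omega> * snd p \<omega>') * c \<omega>' = (\<Sum>p\<leftarrow>L'. fst p \<omega> * (snd p \<omega>' * c \<omega>'))"
      for \<omega> \<omega>' and L' :: "(('v bdry \<Rightarrow> complex) \<times> ('v bdry \<Rightarrow> complex)) list"
      by (induction L') (simp_all add: algebra_simps)
    show ?thesis using L assms(1) eq unfolding sepr_def by (auto simp: o_def intro: lc_mult)
  qed
  then show ?thesis unfolding sep_def by blast
qed

lemma sep_scale: "sep F \<Longrightarrow> sep (\<lambda>\<omega> \<omega>'. c * F \<omega> \<omega>')"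
  using sep_ml[OF lc_const] by blast

context
  fixes \<mu> \<nu> :: "('v bdry \<Rightarrow> complex) \<Rightarrow> complex"
  assumes dm: "distribution E \<mu>" and dn: "distribution E \<nu>"
begin

lemma T_add: assumes "sep F" "sep G"
  shows "tensor_int \<mu> \<nu> (\<lambda>\<omega> \<omega>'. F \<omega> \<omega>' + G \<omega> \<omega>') = tensor_int \<mu> \<nu> F + tensor_int \<mu> \<nu> G"
proof -
  obtain L1 where L1: "sepr F L1" using assms(1) unfolding sep_def by blast
  obtain L2 where L2: "sepr G L2" using assms(2) unfolding sep_def by blast
  show ?thesis using TI[OF dm dn L1] TI[OF dm dn L2] TI[OF dm dn sepr_append[OF L1 L2]] by simp
qed

lemma T_zero: "tensor_int \<mu> \<nu> (\<lambda>\<omega> \<omega>'. 0) = 0"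
  using TI[OF dm dn sepr_zero] by simp

lemma T_cong: assumes "sep F" "\<And>\<omega> \<omega>'. \<omega> \<in> boundary E \<Longrightarrow> \<omega>' \<in> boundary E \<Longrightarrow> F \<omega> \<omega>' = G \<omega> \<omega>'"
  shows "tensor_int \<mu> \<nu> G = tensor_int \<mu> \<nu> F"
proof -
  obtain L where L: "sepr F L" using assms(1) unfolding sep_def by blast
  have L2: "sepr G L" by (rule sepr_cong[OF L assms(2)])
  show ?thesis using TI[OF dm dn L] TI[OF dm dn L2] by simp
qed

lemma T_sum: "finite S \<Longrightarrow> (\<And>i. i \<in> S \<Longrightarrow> sep (F i)) \<Longrightarrow>
   tensor_int \<mu> \<nu> (\<lambda>\<omega> \<omega>'. \<Sum>i\<in>S. F i \<omega> \<omega>') = (\<Sum>i\<in>S. tensor_int \<mu> \<nu> (F i))"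
proof (induction S rule: finite_induct)
  case empty then show ?case using T_zero by simp
next
  case (insert x S)
  have "tensor_int \<mu> \<nu> (\<lambda>\<omega> \<omega>'. \<Sum>i\<in>insert x S. F i \<omega> \<omega>') =
        tensor_int \<mu> \<nu> (\<lambda>\<omega> \<omega>'. F x \<omega> \<omega>' + (\<Sum>i\<in>S. F i \<omega> \<omega>'))" using insert by simp
  also have "\<dots> = tensor_int \<mu> \<nu> (F x) + tensor_int \<mu> \<nu> (\<lambda>\<omega> \<omega>'. \<Sum>i\<in>S. F i \<omega> \<omega>')"
    by (rule T_add) (use insert sep_sum in auto)
  finally show ?case using insert by simp
qed

lemma T_scale: assumes "sep F" shows "tensor_int \<mu> \<nu> (\<lambda>\<omega> \<omega>'. c * F \<omega> \<omega>') = c * tensor_int \<mu> \<nu> F"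
proof -
  obtain L where L: "sepr F L" using assms unfolding sep_def by blast
  have L2: "sepr (\<lambda>\<omega> \<omega>'. c * F \<omega> \<omega>') (map (\<lambda>p. (\<lambda>\<omega>. c * fst p \<omega>, snd p)) L)"
    using L unfolding sepr_def
    by (auto simp: sum_list_const_mult o_def mult.assoc intro: lc_cmult)
  have lcL: "loc_const E (fst p)" if "p \<in> set L" for p using L that unfolding sepr_def by auto
  have "tensor_int \<mu> \<nu> (\<lambda>\<omega> \<omega>'. c * F \<omega> \<omega>') = (\<Sum>p\<leftarrow>L. \<mu> (\<lambda>\<omega>. c * fst p \<omega>) * \<nu> (snd p))"
    using TI[OF dm dn L2] by (simp add: o_def)
  also have "\<dots> = (\<Sum>p\<leftarrow>L. c * (\<mu> (fst p) * \<nu> (snd p)))"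
    by (rule arg_cong[where f = sum_list], rule map_cong) (auto simp: dist_scale[OF dm] lcL)
  also have "\<dots> = c * tensor_int \<mu> \<nu> F" using TI[OF dm dn L] by (simp add: sum_list_const_mult)
  finally show ?thesis .
qed

end

end

context tree begin

lemma GC:
  assumes \<omega>: "\<omega> \<in> boundary E" and \<omega>': "\<omega>' \<in> boundary E"
  shows "x \<in> geod E \<omega>' \<omega> \<longleftrightarrow> ray_to E x \<omega> 1 \<noteq> ray_to E x \<omega>' 1"
proof
  assume "x \<in> geod E \<omega>' \<omega>"
  then have ne: "\<omega> \<noteq> \<omega>'" and "\<exists>g :: int \<Rightarrow> 'v. (\<forall>k. E (g k) (g (k + 1)) \<and> g (k + 2) \<noteq> g k) \<and>
            (\<lambda>n. g (int n)) \<in> \<omega> \<and> (\<lambda>n. g (- int n)) \<in> \<omega>' \<and> x \<in> range g"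
    unfolding geod_def by (auto split: if_splits)
  then obtain g :: "int \<Rightarrow> 'v" where g: "\<forall>k. E (g k) (g (k + 1)) \<and> g (k + 2) \<noteq> g k"
    "(\<lambda>n. g (int n)) \<in> \<omega>" "(\<lambda>n. g (- int n)) \<in> \<omega>'" "x \<in> range g" by blast
  obtain i0 where i0: "x = g i0" using g(4) by auto
  define r1 where "r1 n = g (i0 + int n)" for n
  define r2 where "r2 n = g (i0 - int n)" for n
  have ray1: "is_ray E r1" unfolding is_ray_def r1_def
  proof (intro allI conjI)
    fix n
    have e: "i0 + int (Suc n) = (i0 + int n) + 1" by simp
    show "E (g (i0 + int n)) (g (i0 + int (Suc n)))" unfolding e using g(1) by blast
    have e2: "i0 + int (n + 2) = (i0 + int n) + 2" by simp
    show "g (i0 + int (n + 2)) \<noteq> g (i0 + int n)" unfolding e2 using g(1) by blast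
  qed
  have ray2: "is_ray E r2" unfolding is_ray_def r2_def
  proof (intro allI conjI)
    fix n
    have "E (g (i0 - int (Suc n))) (g (i0 - int (Suc n) + 1))" using g(1) by blast
    moreover have "i0 - int (Suc n) + 1 = i0 - int n" by simp
    ultimately show "E (g (i0 - int n)) (g (i0 - int (Suc n)))" using Esym by metis
    have "g (i0 - int (n+2) + 2) \<noteq> g (i0 - int (n+2))" using g(1) by blast
    moreover have "i0 - int (n+2) + 2 = i0 - int n" by simp
    ultimately show "g (i0 - int (n + 2)) \<noteq> g (i0 - int n)" by metis
  qed
  have eq1: "ray_equiv (\<lambda>n. g (int n)) r1"
  proof (cases "0 \<le> i0")
    case True
    have "\<forall>n. g (int (n + nat i0)) = r1 (n + 0)" unfolding r1_def using True by (simp add: add.commute)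
    then show ?thesis unfolding ray_equiv_def by blast
  next
    case False
    have "\<forall>n. g (int (n + 0)) = r1 (n + nat (- i0))" unfolding r1_def using False by simp
    then show ?thesis unfolding ray_equiv_def by blast
  qed
  have eq2: "ray_equiv (\<lambda>n. g (- int n)) r2"
  proof (cases "i0 \<le> 0")
    case True
    have "\<forall>n. g (- int (n + nat (- i0))) = r2 (n + 0)" unfolding r2_def using True by simp
    then show ?thesis unfolding ray_equiv_def by blast
  next
    case False
    have "\<forall>n. g (- int (n + 0)) = r2 (n + nat i0)" unfolding r2_def using False by simp
    then show ?thesis unfolding ray_equiv_def by blast
  qed
  have "r1 \<in> \<omega>" using bdry_closed[OF \<omega> g(2) ray1 eq1] .
  then have R1: "ray_to E x \<omega> = r1" using R_unique[OF \<omega>] i0 unfolding r1_def by simp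
  have "r2 \<in> \<omega>'" using bdry_closed[OF \<omega>' g(3) ray2 eq2] .
  then have R2: "ray_to E x \<omega>' = r2" using R_unique[OF \<omega>'] i0 unfolding r2_def by simp
  have "g (i0 - 1 + 2) \<noteq> g (i0 - 1)" using g(1) by blast
  moreover have "i0 - 1 + 2 = i0 + 1" by simp
  ultimately show "ray_to E x \<omega> 1 \<noteq> ray_to E x \<omega>' 1" unfolding R1 R2 r1_def r2_def by simp
next
  assume ne: "ray_to E x \<omega> 1 \<noteq> ray_to E x \<omega>' 1"
  then have neq: "\<omega> \<noteq> \<omega>'" by auto
  let ?r = "ray_to E x \<omega>" and ?r' = "ray_to E x \<omega>'"
  define g where "g i = (if 0 \<le> i then ?r (nat i) else ?r' (nat (- i)))" for i :: int
  have gpos: "g i = ?r (nat i)" if "0 \<le> i" for i using that unfolding g_def by simp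
  have gneg: "g i = ?r' (nat (- i))" if "i \<le> 0" for i
    using that R_0[OF \<omega>] R_0[OF \<omega>'] unfolding g_def by (cases "i = 0") auto
  have gp: "\<forall>k. E (g k) (g (k + 1)) \<and> g (k + 2) \<noteq> g k"
  proof
    fix k :: int
    show "E (g k) (g (k + 1)) \<and> g (k + 2) \<noteq> g k"
    proof (cases "0 \<le> k")
      case True
      have "nat (k + 1) = Suc (nat k)" "nat (k + 2) = nat k + 2" using True by arith+
      then show ?thesis using gpos[of k] gpos[of "k+1"] gpos[of "k+2"] True R_E[OF \<omega>] R_nb[OF \<omega>] by auto
    next
      case False
      show ?thesis
      proof (cases "k = -1")
        case True
        have "E (?r' 0) (?r' (Suc 0))" using R_E[OF \<omega>'] .
        then have "E (?r' 1) (?r' 0)" using Esym by simp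
        moreover have "g k = ?r' 1" "g (k + 1) = ?r' 0" using gneg True by auto
        moreover have "g (k + 2) = ?r 1" using gpos True by auto
        ultimately show ?thesis using ne by auto
      next
        case F2: False
        then have k2: "k + 2 \<le> 0" using False by arith
        define m where "m = nat (- k - 2)"
        have "nat (- k) = m + 2" "nat (- (k + 1)) = Suc m" "nat (- (k + 2)) = m" unfolding m_def using k2 by arith+
        moreover have "g k = ?r' (nat (- k))" "g (k + 1) = ?r' (nat (- (k + 1)))" "g (k + 2) = ?r' (nat (- (k + 2)))"
          using gneg k2 by auto
        moreover have "E (?r' (Suc m)) (?r' (Suc (Suc m)))" using R_E[OF \<omega>'] .
        moreover have "?r' (m + 2) \<noteq> ?r' m" using R_nb[OF \<omega>'] .
        ultimately show ?thesis using Esym by auto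
      qed
    qed
  qed
  have "(\<lambda>n. g (int n)) = ?r" using gpos by auto
  then have m1: "(\<lambda>n. g (int n)) \<in> \<omega>" using R_mem[OF \<omega>] by simp
  have "(\<lambda>n. g (- int n)) = ?r'" using gneg by auto
  then have m2: "(\<lambda>n. g (- int n)) \<in> \<omega>'" using R_mem[OF \<omega>'] by simp
  have "x = g 0" using gpos[of 0] R_0[OF \<omega>] by simp
  then have "x \<in> range g" by simp
  then show "x \<in> geod E \<omega>' \<omega>" unfolding geod_def using neq gp m1 m2 by auto
qed

lemma SH:
  assumes \<omega>: "\<omega> \<in> boundary E" and \<omega>': "\<omega>' \<in> boundary E"
  shows "ray_to E x \<omega> (Suc n) = ray_to E x \<omega>' (Suc n) \<longleftrightarrow>
    ray_to E (ray_to E x \<omega> n) \<omega> 1 = ray_to E (ray_to E x \<omega> n) \<omega>' 1"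
proof
  assume a: "ray_to E x \<omega> (Suc n) = ray_to E x \<omega>' (Suc n)"
  then have "ray_to E x \<omega> n = ray_to E x \<omega>' n" using R_prefix[OF \<omega> \<omega>' a] by simp
  then show "ray_to E (ray_to E x \<omega> n) \<omega> 1 = ray_to E (ray_to E x \<omega> n) \<omega>' 1"
    using a R_shift[OF \<omega>, of x n 1] R_shift[OF \<omega>', of x n 1] by simp
next
  let ?z = "ray_to E x \<omega> n"
  assume a: "ray_to E ?z \<omega> 1 = ray_to E ?z \<omega>' 1"
  have junc: "ray_to E x \<omega> (n - 1) \<noteq> ray_to E ?z \<omega>' 1" if "0 < n"
  proof -
    have "ray_to E x \<omega> (n - 1 + 2) \<noteq> ray_to E x \<omega> (n - 1)" using R_nb[OF \<omega>] .
    moreover have "n - 1 + 2 = n + 1" using that by arith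
    ultimately show ?thesis using a R_shift[OF \<omega>, of x n 1] by simp
  qed
  have "ray_to E (ray_to E x \<omega> 0) \<omega>' (Suc n) = (if Suc n \<le> n then ray_to E x \<omega> (Suc n) else ray_to E ?z \<omega>' (Suc n - n))"
    by (rule R_concat[OF \<omega>' ray_walk[OF R_ray[OF \<omega>]] ray_nb[OF R_ray[OF \<omega>]] refl junc])
  then have "ray_to E x \<omega>' (Suc n) = ray_to E ?z \<omega>' 1" using R_0[OF \<omega>] by simp
  then show "ray_to E x \<omega> (Suc n) = ray_to E x \<omega>' (Suc n)" using a R_shift[OF \<omega>, of x n 1] by simp
qed

lemma IS:
  assumes \<omega>: "\<omega> \<in> boundary E" and \<omega>': "\<omega>' \<in> boundary E"
  shows "in_S E n x \<omega> \<omega>' \<longleftrightarrow> ray_to E x \<omega> (Suc n) \<noteq> ray_to E x \<omega>' (Suc n)"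
proof
  assume "in_S E n x \<omega> \<omega>'"
  then obtain z where z: "z \<in> geod E \<omega> \<omega>'" "tdist E x z \<le> n" unfolding in_S_def by blast
  have zg: "ray_to E z \<omega>' 1 \<noteq> ray_to E z \<omega> 1" using z(1) GC[OF \<omega>' \<omega>] by simp
  show "ray_to E x \<omega> (Suc n) \<noteq> ray_to E x \<omega>' (Suc n)"
  proof
    assume a: "ray_to E x \<omega> (Suc n) = ray_to E x \<omega>' (Suc n)"
    define d where "d = tdist E x z"
    obtain p where p: "walk E p d" "nonbacktracking p d" "p 0 = x" "p d = z"
      unfolding d_def by (rule geod_exists)
    have "ray_to E x \<omega> d = z \<or> ray_to E x \<omega>' d = z"
    proof (cases "d = 0")
      case True then show ?thesis using p R_0[OF \<omega>] by simp
    next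
      case False
      show ?thesis
      proof (cases "p (d - 1) = ray_to E z \<omega> 1")
        case True
        then have "0 < d \<Longrightarrow> p (d - 1) \<noteq> ray_to E z \<omega>' 1" using zg by simp
        from R_concat[OF \<omega>' p(1,2,4) this, of d] show ?thesis using p(3,4) by simp
      next
        case False
        then have "0 < d \<Longrightarrow> p (d - 1) \<noteq> ray_to E z \<omega> 1" by simp
        from R_concat[OF \<omega> p(1,2,4) this, of d] show ?thesis using p(3,4) by simp
      qed
    qed
    moreover have "ray_to E x \<omega> d = ray_to E x \<omega>' d" "ray_to E x \<omega> (d + 1) = ray_to E x \<omega>' (d + 1)"
      using R_prefix[OF \<omega> \<omega>' a] z(2) unfolding d_def by auto
    ultimately have "ray_to E x \<omega> d = z" "ray_to E x \<omega>' d = z" by auto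
    then have "ray_to E z \<omega> 1 = ray_to E x \<omega> (d + 1)" "ray_to E z \<omega>' 1 = ray_to E x \<omega>' (d + 1)"
      using R_shift[OF \<omega>, of x d 1] R_shift[OF \<omega>', of x d 1] by auto
    then show False using zg \<open>ray_to E x \<omega> (d + 1) = ray_to E x \<omega>' (d + 1)\<close> by simp
  qed
next
  assume ne: "ray_to E x \<omega> (Suc n) \<noteq> ray_to E x \<omega>' (Suc n)"
  define m where "m = (LEAST m. ray_to E x \<omega> (Suc m) \<noteq> ray_to E x \<omega>' (Suc m))"
  have m1: "ray_to E x \<omega> (Suc m) \<noteq> ray_to E x \<omega>' (Suc m)" unfolding m_def by (rule LeastI[of _ n]) (rule ne)
  have m2: "m \<le> n" unfolding m_def by (rule Least_le) (rule ne)
  have m3: "ray_to E x \<omega> m = ray_to E x \<omega>' m"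
  proof (cases m)
    case 0 then show ?thesis using R_0[OF \<omega>] R_0[OF \<omega>'] by simp
  next
    case (Suc m')
    then have "m' < m" by simp
    then show ?thesis using not_less_Least[of m' "\<lambda>m. ray_to E x \<omega> (Suc m) \<noteq> ray_to E x \<omega>' (Suc m)"]
      unfolding m_def[symmetric] Suc by simp
  qed
  define z where "z = ray_to E x \<omega> m"
  have "ray_to E z \<omega> 1 = ray_to E x \<omega> (Suc m)" using R_shift[OF \<omega>, of x m 1] z_def by simp
  moreover have "ray_to E z \<omega>' 1 = ray_to E x \<omega>' (Suc m)" using R_shift[OF \<omega>', of x m 1] z_def m3 by simp
  ultimately have "z \<in> geod E \<omega> \<omega>'" using GC[OF \<omega>' \<omega>] m1 by simp
  moreover have "tdist E x z \<le> n" using R_tdist[OF \<omega>] m2 z_def by simp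
  moreover have "\<omega> \<noteq> \<omega>'" using ne by auto
  ultimately show "in_S E n x \<omega> \<omega>'" unfolding in_S_def by blast
qed

end

context tree begin

definition Pf :: "'v \<Rightarrow> complex \<Rightarrow> ('v \<Rightarrow> 'v) \<Rightarrow> 'v bdry \<Rightarrow> complex" where
  "Pf o' s g \<omega> = exp ((1/2 + \<i> * s) * of_int (horo E o' (g o') (bact g \<omega>)) * of_real (ln (real q)))"

lemma Pf_nz: "Pf o' s g \<omega> \<noteq> 0" unfolding Pf_def by simp

lemma lc_Pf: assumes a: "aut g" shows "loc_const E (\<lambda>\<omega>. Pf o' s g \<omega>)"
proof -
  have "loc_const E (\<lambda>\<eta>. exp ((1/2 + \<i> * s) * of_int (horo E o' (g o') \<eta>) * of_real (ln (real q))))"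
    by (rule lc_horo)
  from lc_bact[OF a this] show ?thesis unfolding Pf_def by simp
qed

lemma lc_div: "loc_const E f \<Longrightarrow> loc_const E h \<Longrightarrow> loc_const E (\<lambda>\<omega>. f \<omega> / h \<omega>)"
  by (rule lc_comb)

lemma cnj_Pf: "cnj (Pf o' (- cnj s) g \<omega>) = Pf o' s g \<omega>"
  unfolding Pf_def exp_cnj by simp

lemma poisson_aut: assumes a: "aut g" and \<omega>: "\<omega> \<in> boundary E"
  shows "poisson q E o' s (g x) (bact g \<omega>) = poisson q E o' s x \<omega> * Pf o' s g \<omega>"
proof -
  have h: "horo E o' (g x) (bact g \<omega>) = horo E o' (g o') (bact g \<omega>) + horo E o' x \<omega>"
    by (rule horo_aut2[OF a \<omega>])
  show ?thesis unfolding poisson_def Pf_def h by (simp add: algebra_simps flip: exp_add)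
qed

lemma EQ:
  assumes a: "aut g" and bv: "boundary_value q E o' s \<phi> \<mu>" and inv: "\<forall>x. \<phi> (g x) = \<phi> x"
    and f: "loc_const E f"
  shows "\<mu> (\<lambda>\<omega>. f (bact g \<omega>) / Pf o' s g \<omega>) = \<mu> f"
proof -
  have d\<mu>: "distribution E \<mu>" using bv unfolding boundary_value_def by blast
  have PT: "\<And>x. \<mu> (\<lambda>\<omega>. poisson q E o' s x \<omega>) = \<phi> x"
    using bv unfolding boundary_value_def poisson_transform_def by blast
  have uniq: "\<And>\<nu>. distribution E \<nu> \<Longrightarrow> (\<forall>x. poisson_transform q E o' s \<nu> x = \<phi> x) \<Longrightarrow> (\<forall>f. loc_const E f \<longrightarrow> \<nu> f = \<mu> f)"
    using bv unfolding boundary_value_def by blast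
  define \<nu> where "\<nu> h = \<mu> (\<lambda>\<omega>. h (bact g \<omega>) / Pf o' s g \<omega>)" for h
  have lcT: "loc_const E (\<lambda>\<omega>. h (bact g \<omega>) / Pf o' s g \<omega>)" if "loc_const E h" for h
    by (rule lc_div[OF lc_bact[OF a that] lc_Pf[OF a]])
  have d\<nu>: "distribution E \<nu>" unfolding distribution_def
  proof (intro conjI allI impI)
    fix h1 h2 :: "'v bdry \<Rightarrow> complex" assume h: "loc_const E h1 \<and> (\<forall>\<omega>\<in>boundary E. h1 \<omega> = h2 \<omega>)"
    have "\<nu> h2 = \<nu> h1" unfolding \<nu>_def
      by (rule dist_cong[OF d\<mu> lcT]) (use h aut_bdry[OF a] in auto)
    then show "\<nu> h1 = \<nu> h2" by simp
  next
    fix h1 h2 :: "'v bdry \<Rightarrow> complex" assume h: "loc_const E h1 \<and> loc_const E h2"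
    have e: "(\<lambda>\<omega>. (h1 (bact g \<omega>) + h2 (bact g \<omega>)) / Pf o' s g \<omega>) =
      (\<lambda>\<omega>. h1 (bact g \<omega>) / Pf o' s g \<omega> + h2 (bact g \<omega>) / Pf o' s g \<omega>)" by (simp add: add_divide_distrib)
    show "\<nu> (\<lambda>\<omega>. h1 \<omega> + h2 \<omega>) = \<nu> h1 + \<nu> h2" unfolding \<nu>_def e
      using dist_add[OF d\<mu> lcT lcT] h by blast
  next
    fix c and h :: "'v bdry \<Rightarrow> complex" assume h: "loc_const E h"
    have e: "(\<lambda>\<omega>. c * h (bact g \<omega>) / Pf o' s g \<omega>) = (\<lambda>\<omega>. c * (h (bact g \<omega>) / Pf o' s g \<omega>))" by simp
    show "\<nu> (\<lambda>\<omega>. c * h \<omega>) = c * \<nu> h" unfolding \<nu>_def e using dist_scale[OF d\<mu> lcT[OF h]] by simp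
  qed
  have pt: "poisson_transform q E o' s \<nu> x = \<phi> x" for x
  proof -
    let ?y = "inv g x"
    have gy: "g ?y = x" using aut_cancel_inv[OF a] .
    have "poisson_transform q E o' s \<nu> x = \<mu> (\<lambda>\<omega>. poisson q E o' s x (bact g \<omega>) / Pf o' s g \<omega>)"
      unfolding poisson_transform_def \<nu>_def ..
    also have "\<dots> = \<mu> (\<lambda>\<omega>. poisson q E o' s ?y \<omega>)"
    proof (rule dist_cong[OF d\<mu> lc_poisson])
      fix \<omega> assume \<omega>: "\<omega> \<in> boundary E"
      have "poisson q E o' s x (bact g \<omega>) = poisson q E o' s ?y \<omega> * Pf o' s g \<omega>"
        using poisson_aut[OF a \<omega>, of o' s ?y] gy by simp
      then show "poisson q E o' s ?y \<omega> = poisson q E o' s x (bact g \<omega>) / Pf o' s g \<omega>"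
        using Pf_nz by simp
    qed
    also have "\<dots> = \<phi> ?y" using PT .
    also have "\<dots> = \<phi> x" using inv[rule_format, of ?y] gy by simp
    finally show ?thesis .
  qed
  have "\<nu> f = \<mu> f" using uniq[OF d\<nu>] pt f by blast
  then show ?thesis unfolding \<nu>_def .
qed

lemma sum_list_div: "(\<Sum>p\<leftarrow>L. f p) / (c :: complex) = (\<Sum>p\<leftarrow>L. f p / c)"
  by (induction L) (simp_all add: add_divide_distrib)

lemma TE:
  assumes a: "aut g" and bv: "boundary_value q E o' s \<phi> \<mu>" and inv: "\<forall>x. \<phi> (g x) = \<phi> x"
    and bv': "boundary_value q E o' s' \<phi>' \<mu>'" and inv': "\<forall>x. \<phi>' (g x) = \<phi>' x"
    and H: "sep H"
  shows "tensor_int \<mu> (cdist \<mu>') (\<lambda>\<omega> \<omega>'. H (bact g \<omega>) (bact g \<omega>') / (Pf o' s g \<omega> * Pf o' (- cnj s') g \<omega>'))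
       = tensor_int \<mu> (cdist \<mu>') H"
proof -
  have d\<mu>: "distribution E \<mu>" using bv unfolding boundary_value_def by blast
  have d\<mu>': "distribution E \<mu>'" using bv' unfolding boundary_value_def by blast
  have dn: "distribution E (cdist \<mu>')" using cdist_dist[OF d\<mu>'] .
  obtain L where L: "sepr H L" using H unfolding sep_def by blast
  have lcL: "loc_const E (fst p)" "loc_const E (snd p)" if "p \<in> set L" for p
    using L that unfolding sepr_def by auto
  define L' where "L' = map (\<lambda>p. (\<lambda>\<omega>. fst p (bact g \<omega>) / Pf o' s g \<omega>,
                                  \<lambda>\<omega>'. snd p (bact g \<omega>') / Pf o' (- cnj s') g \<omega>')) L"
  have L': "sepr (\<lambda>\<omega> \<omega>'. H (bact g \<omega>) (bact g \<omega>') / (Pf o' s g \<omega> * Pf o' (- cnj s') g \<omega>')) L'"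
    unfolding sepr_def
  proof (rule conjI; intro ballI)
    fix p' assume "p' \<in> set L'"
    then obtain p where p: "p \<in> set L" "p' = (\<lambda>\<omega>. fst p (bact g \<omega>) / Pf o' s g \<omega>,
                                  \<lambda>\<omega>'. snd p (bact g \<omega>') / Pf o' (- cnj s') g \<omega>')"
      unfolding L'_def by auto
    show "loc_const E (fst p') \<and> loc_const E (snd p')"
      using p lc_div[OF lc_bact[OF a lcL(1)[OF p(1)]] lc_Pf[OF a]]
        lc_div[OF lc_bact[OF a lcL(2)[OF p(1)]] lc_Pf[OF a]] by simp
  next
    fix \<omega> \<omega>' assume \<omega>: "\<omega> \<in> boundary E" and \<omega>': "\<omega>' \<in> boundary E"
    have "H (bact g \<omega>) (bact g \<omega>') = (\<Sum>p\<leftarrow>L. fst p (bact g \<omega>) * snd p (bact g \<omega>'))"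
      using L aut_bdry[OF a \<omega>] aut_bdry[OF a \<omega>'] unfolding sepr_def by blast
    then show "H (bact g \<omega>) (bact g \<omega>') / (Pf o' s g \<omega> * Pf o' (- cnj s') g \<omega>') =
        (\<Sum>p\<leftarrow>L'. fst p \<omega> * snd p \<omega>')"
      unfolding L'_def by (simp add: sum_list_div o_def)
  qed
  have eq1: "\<mu> (\<lambda>\<omega>. fst p (bact g \<omega>) / Pf o' s g \<omega>) = \<mu> (fst p)" if "p \<in> set L" for p
    by (rule EQ[OF a bv inv lcL(1)[OF that]])
  have eq2: "cdist \<mu>' (\<lambda>\<omega>'. snd p (bact g \<omega>') / Pf o' (- cnj s') g \<omega>') = cdist \<mu>' (snd p)" if "p \<in> set L" for p
  proof -
    have "(\<lambda>\<omega>'. cnj (snd p (bact g \<omega>') / Pf o' (- cnj s') g \<omega>')) = (\<lambda>\<omega>'. cnj (snd p (bact g \<omega>')) / Pf o' s' g \<omega>')"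
      by (simp add: cnj_Pf)
    moreover have "\<mu>' (\<lambda>\<omega>'. cnj (snd p (bact g \<omega>')) / Pf o' s' g \<omega>') = \<mu>' (\<lambda>\<omega>'. cnj (snd p \<omega>'))"
      using EQ[OF a bv' inv' lc_cnj[OF lcL(2)[OF that]]] .
    ultimately show ?thesis unfolding cdist_def by simp
  qed
  have "tensor_int \<mu> (cdist \<mu>') (\<lambda>\<omega> \<omega>'. H (bact g \<omega>) (bact g \<omega>') / (Pf o' s g \<omega> * Pf o' (- cnj s') g \<omega>'))
     = (\<Sum>p\<leftarrow>L'. \<mu> (fst p) * cdist \<mu>' (snd p))" using TI[OF d\<mu> dn L'] .
  also have "\<dots> = (\<Sum>p\<leftarrow>L. \<mu> (\<lambda>\<omega>. fst p (bact g \<omega>) / Pf o' s g \<omega>) * cdist \<mu>' (\<lambda>\<omega>'. snd p (bact g \<omega>') / Pf o' (- cnj s') g \<omega>'))"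
    unfolding L'_def by (simp add: o_def)
  also have "\<dots> = (\<Sum>p\<leftarrow>L. \<mu> (fst p) * cdist \<mu>' (snd p))"
    by (rule arg_cong[where f = sum_list], rule map_cong) (auto simp: eq1 eq2)
  also have "\<dots> = tensor_int \<mu> (cdist \<mu>') H" using TI[OF d\<mu> dn L] by simp
  finally show ?thesis .
qed

lemma lat_aut: "tree_lattice E \<Gamma> \<Longrightarrow> \<gamma> \<in> \<Gamma> \<Longrightarrow> aut \<gamma>"
  unfolding tree_lattice_def aut_def by blast
lemma lat_inv: "tree_lattice E \<Gamma> \<Longrightarrow> \<gamma> \<in> \<Gamma> \<Longrightarrow> inv \<gamma> \<in> \<Gamma>"
  unfolding tree_lattice_def by blast
lemma lat_comp: "tree_lattice E \<Gamma> \<Longrightarrow> \<gamma> \<in> \<Gamma> \<Longrightarrow> \<delta> \<in> \<Gamma> \<Longrightarrow> \<gamma> \<circ> \<delta> \<in> \<Gamma>"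
  unfolding tree_lattice_def by blast
lemma lat_fix: "tree_lattice E \<Gamma> \<Longrightarrow> \<gamma> \<in> \<Gamma> \<Longrightarrow> \<gamma> x = x \<Longrightarrow> \<gamma> = id"
  unfolding tree_lattice_def by blast

lemma lat_free:
  assumes lat: "tree_lattice E \<Gamma>" and g: "\<gamma> \<in> \<Gamma>" "\<gamma>' \<in> \<Gamma>" and eq: "\<gamma> x = \<gamma>' x"
  shows "\<gamma> = \<gamma>'"
proof -
  have d: "inv \<gamma>' \<circ> \<gamma> \<in> \<Gamma>" using lat_comp[OF lat lat_inv[OF lat g(2)] g(1)] .
  have "(inv \<gamma>' \<circ> \<gamma>) x = x" using eq aut_inv_cancel[OF lat_aut[OF lat g(2)]] by simp
  then have id: "inv \<gamma>' \<circ> \<gamma> = id" using lat_fix[OF lat d] by blast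
  show ?thesis
  proof
    fix z
    have "\<gamma> z = \<gamma>' (inv \<gamma>' (\<gamma> z))" using aut_cancel_inv[OF lat_aut[OF lat g(2)]] by simp
    also have "\<dots> = \<gamma>' z" using fun_cong[OF id, of z] by simp
    finally show "\<gamma> z = \<gamma>' z" .
  qed
qed

lemma subsingleton_finite: "(\<And>a b. a \<in> A \<Longrightarrow> b \<in> A \<Longrightarrow> a = b) \<Longrightarrow> finite A"
proof (cases "A = {}")
  case False
  then obtain a where "a \<in> A" by blast
  moreover assume "\<And>a b. a \<in> A \<Longrightarrow> b \<in> A \<Longrightarrow> a = b"
  ultimately have "A \<subseteq> {a}" by blast
  then show ?thesis using finite_subset by blast
qed simp

lemma finite_Gamma0:
  assumes lat: "tree_lattice E \<Gamma>" and S: "finite S1" "finite S2"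
  shows "finite {\<gamma> \<in> \<Gamma>. \<exists>x\<in>S1. \<gamma> x \<in> S2}"
proof -
  have "{\<gamma> \<in> \<Gamma>. \<exists>x\<in>S1. \<gamma> x \<in> S2} \<subseteq> (\<Union>x\<in>S1. \<Union>y\<in>S2. {\<gamma> \<in> \<Gamma>. \<gamma> x = y})" by blast
  moreover have "finite {\<gamma> \<in> \<Gamma>. \<gamma> x = y}" for x y
    by (rule subsingleton_finite) (use lat_free[OF lat] in auto)
  ultimately show ?thesis using S by (meson finite_UN_I finite_subset)
qed

end

context tree begin

lemma sep_term4:
  assumes "loc_const E A" "sep B" "loc_const E P" "loc_const E C"
  shows "sep (\<lambda>\<omega> \<omega>'. A \<omega> * B \<omega> \<omega>' * P \<omega> * C \<omega>')"
proof -
  have "sep (\<lambda>\<omega> \<omega>'. (A \<omega> * P \<omega>) * B \<omega> \<omega>' * C \<omega>')"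
    by (rule sep_mr[OF assms(4) sep_ml[OF lc_mult[OF assms(1,3)] assms(2)]])
  then show ?thesis by (rule sep_cong) (simp add: mult_ac)
qed

lemma CI:
  fixes \<Xi>1 \<Xi>2 :: "'v \<Rightarrow> 'v bdry \<Rightarrow> complex" and b :: "'v \<Rightarrow> 'v bdry \<Rightarrow> 'v bdry \<Rightarrow> complex"
  assumes lat: "tree_lattice E \<Gamma>"
    and bv: "boundary_value q E o' s \<phi> \<mu>" and inv: "\<forall>\<gamma>\<in>\<Gamma>. \<forall>x. \<phi> (\<gamma> x) = \<phi> x"
    and bv': "boundary_value q E o' s' \<phi>' \<mu>'" and inv': "\<forall>\<gamma>\<in>\<Gamma>. \<forall>x. \<phi>' (\<gamma> x) = \<phi>' x"
    and S1f: "finite S1" and S1z: "\<And>x \<omega>. \<omega> \<in> boundary E \<Longrightarrow> x \<notin> S1 \<Longrightarrow> \<Xi>1 x \<omega> = 0"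
    and S1l: "\<And>x. loc_const E (\<Xi>1 x)"
    and S1c: "\<And>x \<omega>. \<omega> \<in> boundary E \<Longrightarrow> (\<Sum>\<gamma>\<in>{\<gamma> \<in> \<Gamma>. \<Xi>1 (\<gamma> x) (bact \<gamma> \<omega>) \<noteq> 0}. \<Xi>1 (\<gamma> x) (bact \<gamma> \<omega>)) = 1"
    and S2f: "finite S2" and S2z: "\<And>x \<omega>. \<omega> \<in> boundary E \<Longrightarrow> x \<notin> S2 \<Longrightarrow> \<Xi>2 x \<omega> = 0"
    and S2l: "\<And>x. loc_const E (\<Xi>2 x)"
    and S2c: "\<And>x \<omega>. \<omega> \<in> boundary E \<Longrightarrow> (\<Sum>\<gamma>\<in>{\<gamma> \<in> \<Gamma>. \<Xi>2 (\<gamma> x) (bact \<gamma> \<omega>) \<noteq> 0}. \<Xi>2 (\<gamma> x) (bact \<gamma> \<omega>)) = 1"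
    and bsep: "\<And>x. sep (b x)"
    and binv: "\<And>\<gamma> x \<omega> \<omega>'. \<gamma> \<in> \<Gamma> \<Longrightarrow> \<omega> \<in> boundary E \<Longrightarrow> \<omega>' \<in> boundary E \<Longrightarrow> b (\<gamma> x) (bact \<gamma> \<omega>) (bact \<gamma> \<omega>') = b x \<omega> \<omega>'"
  shows "tensor_int \<mu> (cdist \<mu>') (\<lambda>\<omega> \<omega>'. \<Sum>x\<in>S1. \<Xi>1 x \<omega> * b x \<omega> \<omega>' * poisson q E o' s x \<omega> * poisson q E o' (- cnj s') x \<omega>')
       = tensor_int \<mu> (cdist \<mu>') (\<lambda>\<omega> \<omega>'. \<Sum>x\<in>S2. \<Xi>2 x \<omega> * b x \<omega> \<omega>' * poisson q E o' s x \<omega> * poisson q E o' (- cnj s') x \<omega>')"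
proof -
  have d\<mu>: "distribution E \<mu>" using bv unfolding boundary_value_def by blast
  have dn: "distribution E (cdist \<mu>')" using bv' cdist_dist unfolding boundary_value_def by blast
  let ?ps = "\<lambda>x \<omega>. poisson q E o' s x \<omega>"
  let ?ps' = "\<lambda>x \<omega>. poisson q E o' (- cnj s') x \<omega>"
  define \<Gamma>0 where "\<Gamma>0 = {\<gamma> \<in> \<Gamma>. \<exists>x\<in>S1. \<gamma> x \<in> S2}"
  have fin0: "finite \<Gamma>0" unfolding \<Gamma>0_def by (rule finite_Gamma0[OF lat S1f S2f])
  have G0: "\<gamma> \<in> \<Gamma>" if "\<gamma> \<in> \<Gamma>0" for \<gamma> using that unfolding \<Gamma>0_def by blast
  have autG: "aut \<gamma>" if "\<gamma> \<in> \<Gamma>" for \<gamma> using lat_aut[OF lat that] .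
  define t where "t = (\<lambda>x \<omega> \<omega>'. \<Xi>1 x \<omega> * b x \<omega> \<omega>' * ?ps x \<omega> * ?ps' x \<omega>')"
  define F where "F = (\<lambda>\<gamma> \<omega> \<omega>'. \<Sum>x\<in>S1. \<Xi>2 (\<gamma> x) (bact \<gamma> \<omega>) * t x \<omega> \<omega>')"
  define H where "H = (\<lambda>\<gamma> \<eta> \<eta>'. \<Sum>y\<in>S2. \<Xi>2 y \<eta> * \<Xi>1 (inv \<gamma> y) (bact (inv \<gamma>) \<eta>) * b y \<eta> \<eta>' * ?ps y \<eta> * ?ps' y \<eta>')"
  have sep_t: "sep (t x)" for x
    unfolding t_def by (rule sep_term4[OF S1l bsep lc_poisson lc_poisson])
  have sepL: "sep (\<lambda>\<omega> \<omega>'. \<Sum>x\<in>S1. t x \<omega> \<omega>')" by (rule sep_sum[OF S1f sep_t])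
  have sepF: "sep (F \<gamma>)" if g: "\<gamma> \<in> \<Gamma>" for \<gamma>
    unfolding F_def by (rule sep_sum[OF S1f sep_ml[OF lc_bact[OF autG[OF g] S2l] sep_t]])
  have sepH: "sep (H \<gamma>)" if g: "\<gamma> \<in> \<Gamma>" for \<gamma>
    unfolding H_def
    by (rule sep_sum[OF S2f sep_term4[OF lc_mult[OF S2l lc_bact[OF autG[OF lat_inv[OF lat g]] S1l]] bsep lc_poisson lc_poisson]])
  have sum1: "(\<Sum>\<gamma>\<in>\<Gamma>0. \<Xi>2 (\<gamma> x) (bact \<gamma> \<omega>)) = 1" if x: "x \<in> S1" and \<omega>: "\<omega> \<in> boundary E" for x \<omega>
  proof -
    let ?N = "{\<gamma> \<in> \<Gamma>. \<Xi>2 (\<gamma> x) (bact \<gamma> \<omega>) \<noteq> 0}"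
    have sub: "?N \<subseteq> \<Gamma>0"
    proof
      fix \<gamma> assume "\<gamma> \<in> ?N"
      then have g: "\<gamma> \<in> \<Gamma>" "\<Xi>2 (\<gamma> x) (bact \<gamma> \<omega>) \<noteq> 0" by auto
      then have "\<gamma> x \<in> S2" using S2z[OF aut_bdry[OF autG[OF g(1)] \<omega>]] by blast
      then show "\<gamma> \<in> \<Gamma>0" unfolding \<Gamma>0_def using g(1) x by blast
    qed
    have "(\<Sum>\<gamma>\<in>\<Gamma>0. \<Xi>2 (\<gamma> x) (bact \<gamma> \<omega>)) = (\<Sum>\<gamma>\<in>?N. \<Xi>2 (\<gamma> x) (bact \<gamma> \<omega>))"
      by (rule sum.mono_neutral_right[OF fin0 sub]) (auto dest: G0)
    also have "\<dots> = 1" using S2c[OF \<omega>] .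
    finally show ?thesis .
  qed
  have step2: "tensor_int \<mu> (cdist \<mu>') (\<lambda>\<omega> \<omega>'. \<Sum>\<gamma>\<in>\<Gamma>0. F \<gamma> \<omega> \<omega>') = tensor_int \<mu> (cdist \<mu>') (\<lambda>\<omega> \<omega>'. \<Sum>x\<in>S1. t x \<omega> \<omega>')"
  proof (rule T_cong[OF d\<mu> dn sepL])
    fix \<omega> \<omega>' assume \<omega>: "\<omega> \<in> boundary E" and \<omega>': "\<omega>' \<in> boundary E"
    have "(\<Sum>x\<in>S1. t x \<omega> \<omega>') = (\<Sum>x\<in>S1. (\<Sum>\<gamma>\<in>\<Gamma>0. \<Xi>2 (\<gamma> x) (bact \<gamma> \<omega>)) * t x \<omega> \<omega>')"
      by (rule sum.cong[OF refl]) (simp add: sum1 \<omega>)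
    also have "\<dots> = (\<Sum>x\<in>S1. \<Sum>\<gamma>\<in>\<Gamma>0. \<Xi>2 (\<gamma> x) (bact \<gamma> \<omega>) * t x \<omega> \<omega>')" by (simp add: sum_distrib_right)
    also have "\<dots> = (\<Sum>\<gamma>\<in>\<Gamma>0. \<Sum>x\<in>S1. \<Xi>2 (\<gamma> x) (bact \<gamma> \<omega>) * t x \<omega> \<omega>')" by (rule sum.swap)
    finally show "(\<Sum>x\<in>S1. t x \<omega> \<omega>') = (\<Sum>\<gamma>\<in>\<Gamma>0. F \<gamma> \<omega> \<omega>')" unfolding F_def by simp
  qed
  have step4: "tensor_int \<mu> (cdist \<mu>') (F \<gamma>) = tensor_int \<mu> (cdist \<mu>') (H \<gamma>)" if g0: "\<gamma> \<in> \<Gamma>0" for \<gamma>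
  proof -
    have g: "\<gamma> \<in> \<Gamma>" using G0[OF g0] .
    have a: "aut \<gamma>" using autG[OF g] .
    let ?dl = "inv \<gamma>"
    let ?P = "\<lambda>\<omega> \<omega>'. Pf o' s \<gamma> \<omega> * Pf o' (- cnj s') \<gamma> \<omega>'"
    have invg: "\<forall>x. \<phi> (\<gamma> x) = \<phi> x" using inv g by blast
    have invg': "\<forall>x. \<phi>' (\<gamma> x) = \<phi>' x" using inv' g by blast
    have e: "tensor_int \<mu> (cdist \<mu>') (\<lambda>\<omega> \<omega>'. H \<gamma> (bact \<gamma> \<omega>) (bact \<gamma> \<omega>') / ?P \<omega> \<omega>') = tensor_int \<mu> (cdist \<mu>') (F \<gamma>)"
    proof (rule T_cong[OF d\<mu> dn sepF[OF g]])
      fix \<omega> \<omega>' assume \<omega>: "\<omega> \<in> boundary E" and \<omega>': "\<omega>' \<in> boundary E"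
      let ?w = "bact \<gamma> \<omega>" and ?w' = "bact \<gamma> \<omega>'"
      have w: "?w \<in> boundary E" "?w' \<in> boundary E" using aut_bdry[OF a \<omega>] aut_bdry[OF a \<omega>'] by auto
      have bk: "bact ?dl ?w = \<omega>" by (rule bact_inv[OF a])
      define G where "G y = \<Xi>2 y ?w * \<Xi>1 (?dl y) (bact ?dl ?w) * b y ?w ?w' * ?ps y ?w * ?ps' y ?w' / ?P \<omega> \<omega>'" for y
      have Hd: "H \<gamma> ?w ?w' / ?P \<omega> \<omega>' = (\<Sum>y\<in>S2. G y)" unfolding H_def G_def by (simp add: sum_divide_distrib)
      have Gg: "G (\<gamma> x) = \<Xi>2 (\<gamma> x) ?w * t x \<omega> \<omega>'" for x
      proof -
        have 1: "?dl (\<gamma> x) = x" using aut_inv_cancel[OF a] .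
        have 2: "b (\<gamma> x) ?w ?w' = b x \<omega> \<omega>'" using binv[OF g \<omega> \<omega>'] .
        have 3: "?ps (\<gamma> x) ?w = ?ps x \<omega> * Pf o' s \<gamma> \<omega>" using poisson_aut[OF a \<omega>] .
        have 4: "?ps' (\<gamma> x) ?w' = ?ps' x \<omega>' * Pf o' (- cnj s') \<gamma> \<omega>'" using poisson_aut[OF a \<omega>'] .
        show ?thesis unfolding G_def t_def 1 2 3 4 bk using Pf_nz[of o' s \<gamma> \<omega>] Pf_nz[of o' "- cnj s'" \<gamma> \<omega>']
          by (simp add: field_simps)
      qed
      have "(\<Sum>x\<in>S1. \<Xi>2 (\<gamma> x) ?w * t x \<omega> \<omega>') = (\<Sum>x\<in>S1. G (\<gamma> x))" using Gg by simp
      also have "\<dots> = sum G (\<gamma> ` S1)"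
        using sum.reindex[OF inj_on_subset[OF aut_inj[OF a] subset_UNIV], of G S1] by (simp add: o_def)
      also have "\<dots> = sum G (\<gamma> ` S1 \<inter> S2)"
      proof (rule sum.mono_neutral_right)
        show "finite (\<gamma> ` S1)" using S1f by simp
        show "\<gamma> ` S1 \<inter> S2 \<subseteq> \<gamma> ` S1" by blast
        show "\<forall>y\<in>\<gamma> ` S1 - \<gamma> ` S1 \<inter> S2. G y = 0" unfolding G_def using S2z[OF w(1)] by auto
      qed
      also have "\<dots> = sum G S2"
      proof (rule sum.mono_neutral_right[symmetric])
        show "finite S2" using S2f .
        show "\<gamma> ` S1 \<inter> S2 \<subseteq> S2" by blast
        show "\<forall>y\<in>S2 - \<gamma> ` S1 \<inter> S2. G y = 0"
        proof
          fix y assume y: "y \<in> S2 - \<gamma> ` S1 \<inter> S2"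
          have "?dl y \<notin> S1"
          proof
            assume "?dl y \<in> S1"
            then have "\<gamma> (?dl y) \<in> \<gamma> ` S1" by blast
            then show False using y aut_cancel_inv[OF a, of y] by simp
          qed
          then have "\<Xi>1 (?dl y) (bact ?dl ?w) = 0" using S1z bk \<omega> by simp
          then show "G y = 0" unfolding G_def by simp
        qed
      qed
      finally show "F \<gamma> \<omega> \<omega>' = H \<gamma> (bact \<gamma> \<omega>) (bact \<gamma> \<omega>') / ?P \<omega> \<omega>'" unfolding F_def Hd by simp
    qed
    have "tensor_int \<mu> (cdist \<mu>') (\<lambda>\<omega> \<omega>'. H \<gamma> (bact \<gamma> \<omega>) (bact \<gamma> \<omega>') / ?P \<omega> \<omega>') = tensor_int \<mu> (cdist \<mu>') (H \<gamma>)"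
      by (rule TE[OF a bv invg bv' invg' sepH[OF g]])
    then show ?thesis using e by simp
  qed
  have sum2: "(\<Sum>\<gamma>\<in>\<Gamma>0. \<Xi>1 (inv \<gamma> y) (bact (inv \<gamma>) \<eta>)) = 1" if y: "y \<in> S2" and \<eta>: "\<eta> \<in> boundary E" for y \<eta>
  proof -
    let ?N = "{\<delta> \<in> \<Gamma>. \<Xi>1 (\<delta> y) (bact \<delta> \<eta>) \<noteq> 0}"
    have bijG: "bij \<gamma>" if "\<gamma> \<in> \<Gamma>" for \<gamma> using autG[OF that] unfolding aut_def by blast
    have injinv: "inj_on inv \<Gamma>0"
    proof
      fix \<gamma> \<gamma>' assume "\<gamma> \<in> \<Gamma>0" "\<gamma>' \<in> \<Gamma>0" "inv \<gamma> = inv \<gamma>'"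
      then show "\<gamma> = \<gamma>'" using inv_inv_eq[OF bijG[OF G0]] by metis
    qed
    have "(\<Sum>\<gamma>\<in>\<Gamma>0. \<Xi>1 (inv \<gamma> y) (bact (inv \<gamma>) \<eta>)) = (\<Sum>\<delta>\<in>inv ` \<Gamma>0. \<Xi>1 (\<delta> y) (bact \<delta> \<eta>))"
      using sum.reindex[OF injinv, of "\<lambda>\<delta>. \<Xi>1 (\<delta> y) (bact \<delta> \<eta>)"] by (simp add: o_def)
    also have "\<dots> = (\<Sum>\<delta>\<in>?N. \<Xi>1 (\<delta> y) (bact \<delta> \<eta>))"
    proof (rule sum.mono_neutral_right)
      show "finite (inv ` \<Gamma>0)" using fin0 by simp
      show "?N \<subseteq> inv ` \<Gamma>0"
      proof
        fix \<delta> assume "\<delta> \<in> ?N"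
        then have d: "\<delta> \<in> \<Gamma>" "\<Xi>1 (\<delta> y) (bact \<delta> \<eta>) \<noteq> 0" by auto
        have "\<delta> y \<in> S1" using S1z[OF aut_bdry[OF autG[OF d(1)] \<eta>]] d(2) by blast
        moreover have "inv \<delta> (\<delta> y) = y" using aut_inv_cancel[OF autG[OF d(1)]] .
        ultimately have "inv \<delta> \<in> \<Gamma>0" unfolding \<Gamma>0_def using lat_inv[OF lat d(1)] y by force
        moreover have "\<delta> = inv (inv \<delta>)" using inv_inv_eq[OF bijG[OF d(1)]] by simp
        ultimately show "\<delta> \<in> inv ` \<Gamma>0" by blast
      qed
      show "\<forall>\<delta>\<in>inv ` \<Gamma>0 - ?N. \<Xi>1 (\<delta> y) (bact \<delta> \<eta>) = 0"
        using lat_inv[OF lat] G0 by auto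
    qed
    also have "\<dots> = 1" using S1c[OF \<eta>] .
    finally show ?thesis .
  qed
  have sepH0: "sep (H \<gamma>)" if "\<gamma> \<in> \<Gamma>0" for \<gamma> using sepH[OF G0[OF that]] .
  have step5: "tensor_int \<mu> (cdist \<mu>') (\<lambda>\<eta> \<eta>'. \<Sum>x\<in>S2. \<Xi>2 x \<eta> * b x \<eta> \<eta>' * ?ps x \<eta> * ?ps' x \<eta>')
      = tensor_int \<mu> (cdist \<mu>') (\<lambda>\<eta> \<eta>'. \<Sum>\<gamma>\<in>\<Gamma>0. H \<gamma> \<eta> \<eta>')"
  proof (rule T_cong[OF d\<mu> dn sep_sum[OF fin0 sepH0]])
    fix \<eta> \<eta>' assume \<eta>: "\<eta> \<in> boundary E" and \<eta>': "\<eta>' \<in> boundary E"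
    have "(\<Sum>\<gamma>\<in>\<Gamma>0. H \<gamma> \<eta> \<eta>') = (\<Sum>\<gamma>\<in>\<Gamma>0. \<Sum>y\<in>S2. \<Xi>1 (inv \<gamma> y) (bact (inv \<gamma>) \<eta>) * (\<Xi>2 y \<eta> * b y \<eta> \<eta>' * ?ps y \<eta> * ?ps' y \<eta>'))"
      unfolding H_def by (simp add: mult_ac)
    also have "\<dots> = (\<Sum>y\<in>S2. \<Sum>\<gamma>\<in>\<Gamma>0. \<Xi>1 (inv \<gamma> y) (bact (inv \<gamma>) \<eta>) * (\<Xi>2 y \<eta> * b y \<eta> \<eta>' * ?ps y \<eta> * ?ps' y \<eta>'))"
      by (rule sum.swap)
    also have "\<dots> = (\<Sum>y\<in>S2. (\<Sum>\<gamma>\<in>\<Gamma>0. \<Xi>1 (inv \<gamma> y) (bact (inv \<gamma>) \<eta>)) * (\<Xi>2 y \<eta> * b y \<eta> \<eta>' * ?ps y \<eta> * ?ps' y \<eta>'))"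
      by (simp add: sum_distrib_right)
    also have "\<dots> = (\<Sum>y\<in>S2. \<Xi>2 y \<eta> * b y \<eta> \<eta>' * ?ps y \<eta> * ?ps' y \<eta>')"
      by (rule sum.cong[OF refl]) (simp add: sum2 \<eta>)
    finally show "(\<Sum>\<gamma>\<in>\<Gamma>0. H \<gamma> \<eta> \<eta>') = (\<Sum>x\<in>S2. \<Xi>2 x \<eta> * b x \<eta> \<eta>' * ?ps x \<eta> * ?ps' x \<eta>')" .
  qed
  have "tensor_int \<mu> (cdist \<mu>') (\<lambda>\<omega> \<omega>'. \<Sum>x\<in>S1. \<Xi>1 x \<omega> * b x \<omega> \<omega>' * ?ps x \<omega> * ?ps' x \<omega>')
      = tensor_int \<mu> (cdist \<mu>') (\<lambda>\<omega> \<omega>'. \<Sum>x\<in>S1. t x \<omega> \<omega>')" unfolding t_def ..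
  also have "\<dots> = tensor_int \<mu> (cdist \<mu>') (\<lambda>\<omega> \<omega>'. \<Sum>\<gamma>\<in>\<Gamma>0. F \<gamma> \<omega> \<omega>')" using step2 by simp
  also have "\<dots> = (\<Sum>\<gamma>\<in>\<Gamma>0. tensor_int \<mu> (cdist \<mu>') (F \<gamma>))"
    by (rule T_sum[OF d\<mu> dn fin0]) (rule sepF[OF G0])
  also have "\<dots> = (\<Sum>\<gamma>\<in>\<Gamma>0. tensor_int \<mu> (cdist \<mu>') (H \<gamma>))" by (rule sum.cong[OF refl]) (rule step4)
  also have "\<dots> = tensor_int \<mu> (cdist \<mu>') (\<lambda>\<eta> \<eta>'. \<Sum>\<gamma>\<in>\<Gamma>0. H \<gamma> \<eta> \<eta>')"
    by (rule T_sum[OF d\<mu> dn fin0, symmetric]) (rule sepH0)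
  also have "\<dots> = tensor_int \<mu> (cdist \<mu>') (\<lambda>\<eta> \<eta>'. \<Sum>x\<in>S2. \<Xi>2 x \<eta> * b x \<eta> \<eta>' * ?ps x \<eta> * ?ps' x \<eta>')"
    using step5 by simp
  finally show ?thesis .
qed

end

context tree begin

lemma lc_cong: assumes "loc_const E f" "\<And>\<omega>. \<omega> \<in> boundary E \<Longrightarrow> f \<omega> = g \<omega>"
  shows "loc_const E g"
  unfolding loc_const_def
proof
  fix \<omega> assume \<omega>: "\<omega> \<in> boundary E"
  obtain x y where c: "\<omega> \<in> cone E x y" "\<forall>\<eta>\<in>cone E x y. f \<eta> = f \<omega>"
    using assms(1) \<omega> unfolding loc_const_def by blast
  have "\<forall>\<eta>\<in>cone E x y. g \<eta> = g \<omega>"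
  proof
    fix \<eta> assume "\<eta> \<in> cone E x y"
    then have "\<eta> \<in> boundary E" unfolding cone_def by simp
    then show "g \<eta> = g \<omega>" using c \<open>\<eta> \<in> cone E x y\<close> assms(2) \<omega> by metis
  qed
  then show "\<exists>x y. \<omega> \<in> cone E x y \<and> (\<forall>\<eta>\<in>cone E x y. g \<eta> = g \<omega>)" using c(1) by blast
qed

lemma lc_ifR: assumes "loc_const E f"
  shows "loc_const E (\<lambda>\<omega>. if ray_to E x \<omega> k = y then f \<omega> else 0)"
proof -
  have "lcat x (\<lambda>\<omega>. ray_to E x \<omega> k)" by (rule lcat_R)
  moreover have "lcat x f" using assms lc_iff by blast
  ultimately have "lcat x (\<lambda>\<omega>. if ray_to E x \<omega> k = y then f \<omega> else 0)"
    using lcat_comb[of x "\<lambda>\<omega>. ray_to E x \<omega> k" f "\<lambda>u v. if u = y then v else 0"] by simp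
  then show ?thesis using lc_iff by blast
qed

lemma sepB: assumes "loc_const E f"
  shows "sep (\<lambda>\<omega> \<omega>'. if ray_to E x \<omega> k = ray_to E x \<omega>' k then f \<omega> else 0)"
proof -
  let ?Y = "{y. tdist E x y \<le> k}"
  have "sep (\<lambda>\<omega> \<omega>'. \<Sum>y\<in>?Y. (if ray_to E x \<omega> k = y then f \<omega> else 0) * (if ray_to E x \<omega>' k = y then 1 else 0))"
    by (rule sep_sum[OF ball_finite sep_prod[OF lc_ifR[OF assms] lc_ifR[OF lc_const]]])
  then show ?thesis
  proof (rule sep_cong)
    fix \<omega> \<omega>' assume \<omega>: "\<omega> \<in> boundary E" and \<omega>': "\<omega>' \<in> boundary E"
    have mem: "ray_to E x \<omega> k \<in> ?Y" using R_tdist[OF \<omega>] by simp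
    have "(\<Sum>y\<in>?Y. (if ray_to E x \<omega> k = y then f \<omega> else 0) * (if ray_to E x \<omega>' k = y then 1 else 0))
        = (\<Sum>y\<in>?Y. if ray_to E x \<omega> k = y then f \<omega> * (if ray_to E x \<omega>' k = ray_to E x \<omega> k then 1 else 0) else 0)"
      by (rule sum.cong[OF refl]) auto
    also have "\<dots> = f \<omega> * (if ray_to E x \<omega>' k = ray_to E x \<omega> k then 1 else 0)"
      using mem ball_finite by simp
    finally show "(\<Sum>y\<in>?Y. (if ray_to E x \<omega> k = y then f \<omega> else 0) * (if ray_to E x \<omega>' k = y then 1 else 0))
        = (if ray_to E x \<omega> k = ray_to E x \<omega>' k then f \<omega> else 0)" by auto
  qed
qed

lemma shift_set: assumes \<omega>: "\<omega> \<in> boundary E"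
  shows "{y. tdist E y z = n \<and> z \<in> rayset E y \<omega>} = {y. ray_to E y \<omega> n = z}"
proof (intro set_eqI iffI)
  fix y assume "y \<in> {y. tdist E y z = n \<and> z \<in> rayset E y \<omega>}"
  then have y: "tdist E y z = n" "z \<in> range (ray_to E y \<omega>)" unfolding rayset_def by auto
  obtain i where i: "z = ray_to E y \<omega> i" using y(2) by (rule rangeE)
  then have "i = n" using R_tdist[OF \<omega>, of y i] y(1) by simp
  then show "y \<in> {y. ray_to E y \<omega> n = z}" using i by simp
next
  fix y assume "y \<in> {y. ray_to E y \<omega> n = z}"
  then have y: "ray_to E y \<omega> n = z" by simp
  then have "tdist E y z = n" using R_tdist[OF \<omega>] by blast
  moreover have "z \<in> rayset E y \<omega>" unfolding rayset_def using y by (metis rangeI)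
  ultimately show "y \<in> {y. tdist E y z = n \<and> z \<in> rayset E y \<omega>}" by simp
qed

lemma shift_lc: assumes "\<And>y. loc_const E (a y)"
  shows "loc_const E (\<lambda>\<omega>. shift_sum E n a z \<omega>)"
proof -
  let ?Y = "{y. tdist E z y \<le> n}"
  have "loc_const E (\<lambda>\<omega>. \<Sum>y\<in>?Y. if ray_to E y \<omega> n = z then a y \<omega> else 0)"
    by (rule lc_sum[OF ball_finite lc_ifR[OF assms]])
  then show ?thesis
  proof (rule lc_cong)
    fix \<omega> assume \<omega>: "\<omega> \<in> boundary E"
    have "{y. ray_to E y \<omega> n = z} = {y \<in> ?Y. ray_to E y \<omega> n = z}"
      using R_tdist[OF \<omega>] tdist_sym by auto
    then have "shift_sum E n a z \<omega> = (\<Sum>y\<in>{y \<in> ?Y. ray_to E y \<omega> n = z}. a y \<omega>)"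
      unfolding shift_sum_def shift_set[OF \<omega>] by simp
    also have "\<dots> = (\<Sum>y\<in>?Y. if ray_to E y \<omega> n = z then a y \<omega> else 0)"
      by (rule sum.inter_filter[OF ball_finite])
    finally show "(\<Sum>y\<in>?Y. if ray_to E y \<omega> n = z then a y \<omega> else 0) = shift_sum E n a z \<omega>" by simp
  qed
qed

lemma pp_shift:
  assumes \<omega>: "\<omega> \<in> boundary E" and \<omega>': "\<omega>' \<in> boundary E" and eq: "ray_to E x \<omega>' n = ray_to E x \<omega> n"
  shows "poisson q E o' s x \<omega> * poisson q E o' (- cnj s') x \<omega>' =
    exp (- of_nat n * (1 + \<i> * s - \<i> * cnj s') * of_real (ln (real q))) *
    (poisson q E o' s (ray_to E x \<omega> n) \<omega> * poisson q E o' (- cnj s') (ray_to E x \<omega> n) \<omega>')"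
proof -
  have h1: "horo E o' x \<omega> = horo E o' (ray_to E x \<omega> n) \<omega> - int n" by (rule horo_ray_shift[OF \<omega>])
  have h2: "horo E o' x \<omega>' = horo E o' (ray_to E x \<omega> n) \<omega>' - int n"
    using horo_ray_shift[OF \<omega>', of o' x n] eq by simp
  show ?thesis unfolding poisson_def h1 h2 by (simp add: algebra_simps flip: exp_add)
qed

end

lemma cutoff_props:
  assumes "cutoff E \<Gamma> \<Xi>"
  shows "finite {x. \<exists>\<omega>\<in>boundary E. \<Xi> x \<omega> \<noteq> 0}" "\<And>x. loc_const E (\<Xi> x)"
    "\<And>x \<omega>. \<omega> \<in> boundary E \<Longrightarrow> (\<Sum>\<gamma>\<in>{\<gamma>\<in>\<Gamma>. \<Xi> (\<gamma> x) (bact \<gamma> \<omega>) \<noteq> 0}. \<Xi> (\<gamma> x) (bact \<gamma> \<omega>)) = 1"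
  using assms unfolding cutoff_def by blast+

theorem proposition5p8:
  fixes q n :: nat and E :: "'v \<Rightarrow> 'v \<Rightarrow> bool" and o' :: 'v
    and \<Gamma> :: "('v \<Rightarrow> 'v) set" and \<Xi> a :: "'v \<Rightarrow> 'v bdry \<Rightarrow> complex"
    and s s' :: complex and \<phi> \<phi>' :: "'v \<Rightarrow> complex"
    and \<mu> \<mu>' :: "('v bdry \<Rightarrow> complex) \<Rightarrow> complex"
  assumes "2 \<le> q"
    and "regular_tree q E"
    and "tree_lattice E \<Gamma>"
    and "cutoff E \<Gamma> \<Xi>"
    and "\<forall>\<gamma>\<in>\<Gamma>. \<forall>x. \<phi> (\<gamma> x) = \<phi> x"
    and "\<forall>\<gamma>\<in>\<Gamma>. \<forall>x. \<phi>' (\<gamma> x) = \<phi>' x"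
    and "\<forall>x. tree_laplacian q E \<phi> x = chi q s * \<phi> x"
    and "\<forall>x. tree_laplacian q E \<phi>' x = chi q s' * \<phi>' x"
    and "boundary_value q E o' s \<phi> \<mu>"
    and "boundary_value q E o' s' \<phi>' \<mu>'"
    and "lc_inv E \<Gamma> a"
  shows "wigner_near q E o' \<Xi> s s' \<mu> \<mu>' n a =
    exp (- of_nat n * (1 + \<i> * s - \<i> * cnj s') * of_real (ln (real q))) *
    (wigner q E o' \<Xi> s s' \<mu> \<mu>' (shift_sum E n a)
     - patterson_sullivan q E o' \<Xi> s s' \<mu> \<mu>' (shift_sum E n a))"
proof -
  interpret tree q E by unfold_locales (rule assms(2))
  note lat = assms(3)
  have bv: "boundary_value q E o' s \<phi> \<mu>" and bv': "boundary_value q E o' s' \<phi>' \<mu>'" using assms(9,10) .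
  have d\<mu>: "distribution E \<mu>" using bv unfolding boundary_value_def by blast
  have dn: "distribution E (cdist \<mu>')" using bv' cdist_dist unfolding boundary_value_def by blast
  have alc: "\<And>x. loc_const E (a x)" using assms(11) unfolding lc_inv_def by blast
  have ainv: "\<And>\<gamma> x \<omega>. \<gamma> \<in> \<Gamma> \<Longrightarrow> \<omega> \<in> boundary E \<Longrightarrow> a (\<gamma> x) (bact \<gamma> \<omega>) = a x \<omega>"
    using assms(11) unfolding lc_inv_def by blast
  let ?ps = "\<lambda>x \<omega>. poisson q E o' s x \<omega>"
  let ?ps' = "\<lambda>x \<omega>. poisson q E o' (- cnj s') x \<omega>"
  let ?T = "tensor_int \<mu> (cdist \<mu>')"
  define c where "c = exp (- of_nat n * (1 + \<i> * s - \<i> * cnj s') * of_real (ln (real q)))"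
  define S1 where "S1 = {x. \<exists>\<omega>\<in>boundary E. \<Xi> x \<omega> \<noteq> 0}"
  have S1f: "finite S1" unfolding S1_def using cutoff_props(1)[OF assms(4)] .
  have S1z: "\<And>x \<omega>. \<omega> \<in> boundary E \<Longrightarrow> x \<notin> S1 \<Longrightarrow> \<Xi> x \<omega> = 0" unfolding S1_def by blast
  have S1l: "\<And>x. loc_const E (\<Xi> x)" using cutoff_props(2)[OF assms(4)] .
  have S1c: "\<And>x \<omega>. \<omega> \<in> boundary E \<Longrightarrow> (\<Sum>\<gamma>\<in>{\<gamma>\<in>\<Gamma>. \<Xi> (\<gamma> x) (bact \<gamma> \<omega>) \<noteq> 0}. \<Xi> (\<gamma> x) (bact \<gamma> \<omega>)) = 1"
    using cutoff_props(3)[OF assms(4)] .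
  define \<Xi>2 where "\<Xi>2 = (\<lambda>x \<omega>. \<Xi> (ray_to E x \<omega> n) \<omega>)"
  define S2 where "S2 = {x. \<exists>\<omega>\<in>boundary E. \<Xi>2 x \<omega> \<noteq> 0}"
  have S2sub: "S2 \<subseteq> (\<Union>z\<in>S1. {x. tdist E z x \<le> n})"
  proof
    fix x assume "x \<in> S2"
    then obtain \<omega> where \<omega>: "\<omega> \<in> boundary E" "\<Xi> (ray_to E x \<omega> n) \<omega> \<noteq> 0" unfolding S2_def \<Xi>2_def by blast
    then have "ray_to E x \<omega> n \<in> S1" unfolding S1_def by blast
    moreover have "tdist E (ray_to E x \<omega> n) x \<le> n" using R_tdist[OF \<omega>(1)] tdist_sym by simp
    ultimately show "x \<in> (\<Union>z\<in>S1. {x. tdist E z x \<le> n})" by blast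
  qed
  have S2f: "finite S2" using S2sub S1f ball_finite by (meson finite_UN_I finite_subset)
  have S2z: "\<And>x \<omega>. \<omega> \<in> boundary E \<Longrightarrow> x \<notin> S2 \<Longrightarrow> \<Xi>2 x \<omega> = 0" unfolding S2_def by blast
  have S2l: "loc_const E (\<Xi>2 x)" for x
  proof -
    have "lcat x (\<lambda>\<omega>. \<Xi> (ray_to E x \<omega> n) \<omega>)"
      by (rule lcat_dep[OF lcat_R]) (use S1l lc_iff in blast)
    then show ?thesis unfolding \<Xi>2_def using lc_iff by blast
  qed
  have S2c: "(\<Sum>\<gamma>\<in>{\<gamma>\<in>\<Gamma>. \<Xi>2 (\<gamma> x) (bact \<gamma> \<omega>) \<noteq> 0}. \<Xi>2 (\<gamma> x) (bact \<gamma> \<omega>)) = 1"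
    if \<omega>: "\<omega> \<in> boundary E" for x \<omega>
  proof -
    have e: "\<Xi>2 (\<gamma> x) (bact \<gamma> \<omega>) = \<Xi> (\<gamma> (ray_to E x \<omega> n)) (bact \<gamma> \<omega>)" if "\<gamma> \<in> \<Gamma>" for \<gamma>
      unfolding \<Xi>2_def using R_aut[OF lat_aut[OF lat that] \<omega>] by simp
    have "{\<gamma>\<in>\<Gamma>. \<Xi>2 (\<gamma> x) (bact \<gamma> \<omega>) \<noteq> 0} = {\<gamma>\<in>\<Gamma>. \<Xi> (\<gamma> (ray_to E x \<omega> n)) (bact \<gamma> \<omega>) \<noteq> 0}"
      using e by auto
    then have "(\<Sum>\<gamma>\<in>{\<gamma>\<in>\<Gamma>. \<Xi>2 (\<gamma> x) (bact \<gamma> \<omega>) \<noteq> 0}. \<Xi>2 (\<gamma> x) (bact \<gamma> \<omega>)) =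
      (\<Sum>\<gamma>\<in>{\<gamma>\<in>\<Gamma>. \<Xi> (\<gamma> (ray_to E x \<omega> n)) (bact \<gamma> \<omega>) \<noteq> 0}. \<Xi> (\<gamma> (ray_to E x \<omega> n)) (bact \<gamma> \<omega>))"
      using e by (intro sum.cong) auto
    also have "\<dots> = 1" using S1c[OF \<omega>] .
    finally show ?thesis .
  qed
  define b where "b = (\<lambda>x \<omega> \<omega>'. if ray_to E x \<omega> (Suc n) = ray_to E x \<omega>' (Suc n) then a x \<omega> else 0)"
  have bsep: "sep (b x)" for x unfolding b_def by (rule sepB[OF alc])
  have binv: "b (\<gamma> x) (bact \<gamma> \<omega>) (bact \<gamma> \<omega>') = b x \<omega> \<omega>'"
    if g: "\<gamma> \<in> \<Gamma>" and \<omega>: "\<omega> \<in> boundary E" and \<omega>': "\<omega>' \<in> boundary E" for \<gamma> x \<omega> \<omega>'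
  proof -
    have au: "aut \<gamma>" using lat_aut[OF lat g] .
    have "(\<gamma> (ray_to E x \<omega> (Suc n)) = \<gamma> (ray_to E x \<omega>' (Suc n))) = (ray_to E x \<omega> (Suc n) = ray_to E x \<omega>' (Suc n))"
      using aut_inj[OF au] by (simp add: inj_eq)
    then show ?thesis unfolding b_def using R_aut[OF au \<omega>] R_aut[OF au \<omega>'] ainv[OF g \<omega>] by simp
  qed
  have CIi: "?T (\<lambda>\<omega> \<omega>'. \<Sum>x\<in>S1. \<Xi> x \<omega> * b x \<omega> \<omega>' * ?ps x \<omega> * ?ps' x \<omega>')
      = ?T (\<lambda>\<omega> \<omega>'. \<Sum>x\<in>S2. \<Xi>2 x \<omega> * b x \<omega> \<omega>' * ?ps x \<omega> * ?ps' x \<omega>')"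
    by (rule CI[OF lat bv assms(5) bv' assms(6) S1f S1z S1l S1c S2f S2z S2l S2c bsep binv])
  have sep1: "sep (\<lambda>\<omega> \<omega>'. \<Sum>x\<in>S1. \<Xi> x \<omega> * b x \<omega> \<omega>' * ?ps x \<omega> * ?ps' x \<omega>')"
    by (rule sep_sum[OF S1f sep_term4[OF S1l bsep lc_poisson lc_poisson]])
  have sep2: "sep (\<lambda>\<omega> \<omega>'. \<Sum>x\<in>S2. \<Xi>2 x \<omega> * b x \<omega> \<omega>' * ?ps x \<omega> * ?ps' x \<omega>')"
    by (rule sep_sum[OF S2f sep_term4[OF S2l bsep lc_poisson lc_poisson]])
  have LHS: "wigner_near q E o' \<Xi> s s' \<mu> \<mu>' n a = ?T (\<lambda>\<omega> \<omega>'. \<Sum>x\<in>S1. \<Xi> x \<omega> * b x \<omega> \<omega>' * ?ps x \<omega> * ?ps' x \<omega>')"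
    unfolding wigner_near_def
  proof (rule T_cong[OF d\<mu> dn sep1])
    fix \<omega> \<omega>' assume \<omega>: "\<omega> \<in> boundary E" and \<omega>': "\<omega>' \<in> boundary E"
    have sub: "{x. \<Xi> x \<omega> \<noteq> 0} \<subseteq> S1" unfolding S1_def using \<omega> by blast
    have "(\<Sum>x\<in>S1. \<Xi> x \<omega> * b x \<omega> \<omega>' * ?ps x \<omega> * ?ps' x \<omega>') = (\<Sum>x\<in>{x. \<Xi> x \<omega> \<noteq> 0}. \<Xi> x \<omega> * b x \<omega> \<omega>' * ?ps x \<omega> * ?ps' x \<omega>')"
      by (rule sum.mono_neutral_right[OF S1f sub]) auto
    also have "\<dots> = (\<Sum>x\<in>{x. \<Xi> x \<omega> \<noteq> 0}. (1 - (if in_S E n x \<omega> \<omega>' then 1 else 0)) * \<Xi> x \<omega> * a x \<omega> * ?ps x \<omega> * ?ps' x \<omega>')"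
      by (rule sum.cong[OF refl]) (simp add: b_def IS[OF \<omega> \<omega>'])
    finally show "(\<Sum>x\<in>S1. \<Xi> x \<omega> * b x \<omega> \<omega>' * ?ps x \<omega> * ?ps' x \<omega>') = (\<Sum>x\<in>{x. \<Xi> x \<omega> \<noteq> 0}. (1 - (if in_S E n x \<omega> \<omega>' then 1 else 0)) * \<Xi> x \<omega> * a x \<omega> * ?ps x \<omega> * ?ps' x \<omega>')" .
  qed
  let ?sh = "shift_sum E n a"
  have shl: "loc_const E (\<lambda>\<omega>. ?sh z \<omega>)" for z by (rule shift_lc[OF alc])
  define G where "G = (\<lambda>\<omega> \<omega>' z. (if ray_to E z \<omega> 1 = ray_to E z \<omega>' 1 then 1 else 0) * \<Xi> z \<omega> * ?ps z \<omega> * ?ps' z \<omega>')"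
  define Q where "Q = (\<lambda>\<omega> \<omega>'. \<Sum>z\<in>S1. (if ray_to E z \<omega> 1 = ray_to E z \<omega>' 1 then 1 else 0) * \<Xi> z \<omega> * ?sh z \<omega> * ?ps z \<omega> * ?ps' z \<omega>')"
  define W' where "W' = (\<lambda>\<omega> \<omega>'. \<Sum>z\<in>S1. \<Xi> z \<omega> * ?sh z \<omega> * ?ps z \<omega> * ?ps' z \<omega>')"
  define PS' where "PS' = (\<lambda>\<omega> \<omega>'. \<Sum>z\<in>S1. (if z \<in> geod E \<omega>' \<omega> then 1 else 0) * \<Xi> z \<omega> * ?sh z \<omega> * ?ps z \<omega> * ?ps' z \<omega>')"
  have sepQ: "sep Q"
    unfolding Q_def
  proof (rule sep_sum[OF S1f])
    fix z
    have "sep (\<lambda>\<omega> \<omega>'. (\<Xi> z \<omega> * ?sh z \<omega>) * (if ray_to E z \<omega> 1 = ray_to E z \<omega>' 1 then 1 else 0) * ?ps z \<omega> * ?ps' z \<omega>')"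
      by (rule sep_term4[OF lc_mult[OF S1l shl] sepB[OF lc_const] lc_poisson lc_poisson])
    then show "sep (\<lambda>\<omega> \<omega>'. (if ray_to E z \<omega> 1 = ray_to E z \<omega>' 1 then 1 else 0) * \<Xi> z \<omega> * ?sh z \<omega> * ?ps z \<omega> * ?ps' z \<omega>')"
      by (rule sep_cong) (simp add: mult_ac)
  qed
  have sepW: "sep W'"
    unfolding W'_def
    by (rule sep_sum[OF S1f sep_prod[OF lc_mult[OF lc_mult[OF S1l shl] lc_poisson] lc_poisson]])
  have PSeq: "PS' \<omega> \<omega>' = W' \<omega> \<omega>' + (-1) * Q \<omega> \<omega>'" if \<omega>: "\<omega> \<in> boundary E" and \<omega>': "\<omega>' \<in> boundary E" for \<omega> \<omega>'
  proof -
    have "PS' \<omega> \<omega>' = (\<Sum>z\<in>S1. \<Xi> z \<omega> * ?sh z \<omega> * ?ps z \<omega> * ?ps' z \<omega>' -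
        (if ray_to E z \<omega> 1 = ray_to E z \<omega>' 1 then 1 else 0) * \<Xi> z \<omega> * ?sh z \<omega> * ?ps z \<omega> * ?ps' z \<omega>')"
      unfolding PS'_def by (rule sum.cong[OF refl]) (simp add: GC[OF \<omega> \<omega>'])
    then show ?thesis unfolding W'_def Q_def by (simp add: sum_subtractf)
  qed
  have sepPS: "sep PS'"
    by (rule sep_cong[OF sep_add[OF sepW sep_scale[where c="-1", OF sepQ]]]) (simp add: PSeq)
  have PW: "(\<Sum>x\<in>S2. \<Xi>2 x \<omega> * b x \<omega> \<omega>' * ?ps x \<omega> * ?ps' x \<omega>') = c * Q \<omega> \<omega>'"
    if \<omega>: "\<omega> \<in> boundary E" and \<omega>': "\<omega>' \<in> boundary E" for \<omega> \<omega>'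
  proof -
    let ?zf = "\<lambda>x. ray_to E x \<omega> n"
    let ?g = "\<lambda>z. G \<omega> \<omega>' z"
    have trm: "\<Xi>2 x \<omega> * b x \<omega> \<omega>' * ?ps x \<omega> * ?ps' x \<omega>' = c * (?g (?zf x) * a x \<omega>)" for x
    proof (cases "ray_to E x \<omega> (Suc n) = ray_to E x \<omega>' (Suc n)")
      case True
      have ind: "ray_to E (?zf x) \<omega> 1 = ray_to E (?zf x) \<omega>' 1" using SH[OF \<omega> \<omega>'] True by blast
      have "ray_to E x \<omega>' n = ray_to E x \<omega> n" using R_prefix[OF \<omega> \<omega>' True] by simp
      from pp_shift[OF \<omega> \<omega>' this, of o' s s']
      have pp: "?ps x \<omega> * ?ps' x \<omega>' = c * (?ps (?zf x) \<omega> * ?ps' (?zf x) \<omega>')" unfolding c_def .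
      have "\<Xi>2 x \<omega> * b x \<omega> \<omega>' * ?ps x \<omega> * ?ps' x \<omega>' = \<Xi> (?zf x) \<omega> * a x \<omega> * (?ps x \<omega> * ?ps' x \<omega>')"
        unfolding \<Xi>2_def b_def using True by simp
      also have "\<dots> = c * (?g (?zf x) * a x \<omega>)" unfolding pp G_def using ind by (simp add: mult_ac)
      finally show ?thesis .
    next
      case False
      have ind: "ray_to E (?zf x) \<omega> 1 \<noteq> ray_to E (?zf x) \<omega>' 1" using SH[OF \<omega> \<omega>'] False by blast
      show ?thesis unfolding b_def G_def using False ind by simp
    qed
    have "(\<Sum>x\<in>S2. \<Xi>2 x \<omega> * b x \<omega> \<omega>' * ?ps x \<omega> * ?ps' x \<omega>') = c * (\<Sum>x\<in>S2. ?g (?zf x) * a x \<omega>)"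
      unfolding trm by (simp add: sum_distrib_left)
    also have "(\<Sum>x\<in>S2. ?g (?zf x) * a x \<omega>) = Q \<omega> \<omega>'"
    proof -
      let ?S = "{x \<in> S2. ?zf x \<in> S1}"
      have g0: "?g z = 0" if "z \<notin> S1" for z unfolding G_def using S1z[OF \<omega> that] by simp
      have "(\<Sum>x\<in>S2. ?g (?zf x) * a x \<omega>) = (\<Sum>x\<in>?S. ?g (?zf x) * a x \<omega>)"
        by (rule sum.mono_neutral_right[OF S2f]) (auto simp: g0)
      also have "\<dots> = (\<Sum>z\<in>S1. \<Sum>x\<in>{x. x \<in> ?S \<and> ?zf x = z}. ?g (?zf x) * a x \<omega>)"
        by (rule sum.group[symmetric]) (use S2f S1f in auto)
      also have "\<dots> = (\<Sum>z\<in>S1. ?g z * ?sh z \<omega>)"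
      proof (rule sum.cong[OF refl])
        fix z assume z: "z \<in> S1"
        show "(\<Sum>x\<in>{x. x \<in> ?S \<and> ?zf x = z}. ?g (?zf x) * a x \<omega>) = ?g z * ?sh z \<omega>"
        proof (cases "\<Xi> z \<omega> = 0")
          case True
          then have "?g z = 0" unfolding G_def by simp
          then show ?thesis by simp
        next
          case False
          have "{x. x \<in> ?S \<and> ?zf x = z} = {y. ray_to E y \<omega> n = z}"
          proof (intro set_eqI iffI)
            fix y assume "y \<in> {y. ray_to E y \<omega> n = z}"
            then have y: "ray_to E y \<omega> n = z" by simp
            then have "\<Xi>2 y \<omega> \<noteq> 0" unfolding \<Xi>2_def using False by simp
            then have "y \<in> S2" unfolding S2_def using \<omega> by blast
            then show "y \<in> {x. x \<in> ?S \<and> ?zf x = z}" using y z by simp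
          qed simp
          then have "(\<Sum>x\<in>{x. x \<in> ?S \<and> ?zf x = z}. ?g (?zf x) * a x \<omega>) = (\<Sum>y\<in>{y. ray_to E y \<omega> n = z}. ?g z * a y \<omega>)"
            by simp
          also have "\<dots> = ?g z * ?sh z \<omega>"
            unfolding shift_sum_def shift_set[OF \<omega>] by (simp add: sum_distrib_left)
          finally show ?thesis .
        qed
      qed
      also have "\<dots> = Q \<omega> \<omega>'" unfolding Q_def G_def by (rule sum.cong[OF refl]) (simp add: mult_ac)
      finally show ?thesis .
    qed
    finally show ?thesis .
  qed
  have "wigner_near q E o' \<Xi> s s' \<mu> \<mu>' n a = ?T (\<lambda>\<omega> \<omega>'. \<Sum>x\<in>S2. \<Xi>2 x \<omega> * b x \<omega> \<omega>' * ?ps x \<omega> * ?ps' x \<omega>')"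
    using LHS CIi by simp
  also have "\<dots> = ?T (\<lambda>\<omega> \<omega>'. c * Q \<omega> \<omega>')"
    by (rule T_cong[OF d\<mu> dn sep2, symmetric]) (simp add: PW)
  also have "\<dots> = c * ?T Q" by (rule T_scale[OF d\<mu> dn sepQ])
  also have "?T Q = ?T W' - ?T PS'"
  proof -
    have "?T W' = ?T (\<lambda>\<omega> \<omega>'. Q \<omega> \<omega>' + PS' \<omega> \<omega>')"
      by (rule T_cong[OF d\<mu> dn sep_add[OF sepQ sepPS]]) (simp add: PSeq)
    also have "\<dots> = ?T Q + ?T PS'" by (rule T_add[OF d\<mu> dn sepQ sepPS])
    finally show ?thesis by simp
  qed
  also have "?T W' = wigner q E o' \<Xi> s s' \<mu> \<mu>' ?sh"
    unfolding wigner_def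
  proof (rule T_cong[OF d\<mu> dn sepW, symmetric])
    fix \<omega> \<omega>' assume \<omega>: "\<omega> \<in> boundary E" and \<omega>': "\<omega>' \<in> boundary E"
    have sub: "{x. \<Xi> x \<omega> \<noteq> 0} \<subseteq> S1" unfolding S1_def using \<omega> by blast
    show "W' \<omega> \<omega>' = (\<Sum>x\<in>{x. \<Xi> x \<omega> \<noteq> 0}. \<Xi> x \<omega> * ?sh x \<omega> * ?ps x \<omega> * ?ps' x \<omega>')"
      unfolding W'_def by (rule sum.mono_neutral_right[OF S1f sub]) auto
  qed
  also have "?T PS' = patterson_sullivan q E o' \<Xi> s s' \<mu> \<mu>' ?sh"
    unfolding patterson_sullivan_def
  proof (rule T_cong[OF d\<mu> dn sepPS, symmetric])
    fix \<omega> \<omega>' assume \<omega>: "\<omega> \<in> boundary E" and \<omega>': "\<omega>' \<in> boundary E"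
    have set: "{x \<in> geod E \<omega>' \<omega>. \<Xi> x \<omega> \<noteq> 0} = {x \<in> S1. x \<in> geod E \<omega>' \<omega> \<and> \<Xi> x \<omega> \<noteq> 0}"
      unfolding S1_def using \<omega> by blast
    have "(\<Sum>x\<in>{x \<in> geod E \<omega>' \<omega>. \<Xi> x \<omega> \<noteq> 0}. \<Xi> x \<omega> * ?sh x \<omega> * ?ps x \<omega> * ?ps' x \<omega>')
       = (\<Sum>x\<in>S1. if x \<in> geod E \<omega>' \<omega> \<and> \<Xi> x \<omega> \<noteq> 0 then \<Xi> x \<omega> * ?sh x \<omega> * ?ps x \<omega> * ?ps' x \<omega>' else 0)"
      unfolding set by (rule sum.inter_filter[OF S1f])
    also have "\<dots> = PS' \<omega> \<omega>'" unfolding PS'_def by (rule sum.cong[OF refl]) auto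
    finally show "PS' \<omega> \<omega>' = (\<Sum>x\<in>{x \<in> geod E \<omega>' \<omega>. \<Xi> x \<omega> \<noteq> 0}. \<Xi> x \<omega> * ?sh x \<omega> * ?ps x \<omega> * ?ps' x \<omega>')" by simp
  qed
  finally show ?thesis unfolding c_def .
qed

end
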